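(* Let $D,W,V,K$ be positive integers, $N:=W+VK$, and let $\mathcal{D}\in\mathbb{R}^{W\times VK}$ with $\mathrm{rank}(\mathcal{D})=D$ and $\mathrm{rank}(\mathcal{D}_{1:D,1:D})=D$. Fix $\sharp\in\{\mathrm{st},\mathrm{m}\}$ and index pairs $\theta^{(\sharp)}(1),\dots,\theta^{(\sharp)}(J)$, lying in $\{1,\dots,W\}^{\times2}$ if $\sharp=\mathrm{st}$ and in $\{1,\dots,VK\}^{\times2}$ if $\sharp=\mathrm{m}$, together with known values $c_1,\dots,c_J\in\mathbb{R}$. A matrix $G\in\mathbb{R}^{N\times N}$ is called compatible with the a priori knowledge if $G=P^TP$ for some $P=(P_{\mathrm{st}}\,|\,P_{\mathrm{m}})$ with $P_{\mathrm{st}}\in\mathbb{R}^{D\times W}$, $P_{\mathrm{m}}\in\mathbb{R}^{D\times VK}$, such that $P_{\mathrm{st}}^TP_{\mathrm{m}}=\mathcal{D}$ and $(G_\sharp)_{\theta^{(\sharp)}(j)}=c_j$ for $j=1,\dots,J$, where $G_{\mathrm{st}}=P_{\mathrm{st}}^TP_{\mathrm{st}}$ and $G_{\mathrm{m}}=P_{\mathrm{m}}^TP_{\mathrm{m}}$; assume that at least one compatible $G$ exists. Define $\mathcal{M}:=\bigl(\mathrm{vec}(\mathcal{N}^{(\sharp)}_1)\,|\cdots|\,\mathrm{vec}(\mathcal{N}^{(\sharp)}_J)\bigr)$, where $$\mathcal{N}^{(\mathrm{st})}_j:=\tfrac12\Bigl(\bigl(\mathcal{D}_{\theta^{(\mathrm{st})}(j)_1,1:D}\bigr)^T\mathcal{D}_{\theta^{(\mathrm{st})}(j)_2,1:D}+\bigl(\mathcal{D}_{\theta^{(\mathrm{st})}(j)_2,1:D}\bigr)^T\mathcal{D}_{\theta^{(\mathrm{st})}(j)_1,1:D}\Bigr),$$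 $$\mathcal{N}^{(\mathrm{m})}_j:=\tfrac12\Bigl(\mathcal{D}_{1:D,\theta^{(\mathrm{m})}(j)_1}\bigl(\mathcal{D}_{1:D,\theta^{(\mathrm{m})}(j)_2}\bigr)^T+\mathcal{D}_{1:D,\theta^{(\mathrm{m})}(j)_2}\bigl(\mathcal{D}_{1:D,\theta^{(\mathrm{m})}(j)_1}\bigr)^T\Bigr).$$ Then the following are equivalent: (i) there exists only one matrix $G$ with $\mathrm{rank}(G)=D$ which is compatible with the a priori knowledge; (ii) $\mathrm{rank}(\mathcal{M})=D(D+1)/2$.
   Context: $\mathcal{D}_{1:D,1:D}$ is the top-left $D\times D$ submatrix of $\mathcal{D}$; $\mathcal{D}_{i,1:D}$ is the row vector formed by the first $D$ entries of row $i$ of $\mathcal{D}$; $\mathcal{D}_{1:D,l}$ is the column vector formed by the first $D$ entries of column $l$ of $\mathcal{D}$. For an index pair $\theta(j)$, $\theta(j)_1,\theta(j)_2$ denote its two components. $\mathrm{vec}(X)$ stacks the columns of $X$ into a single column vector. *)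

theory Defs
  imports "Jordan_Normal_Form.DL_Rank"
begin

(* All indices are 0-based: paper index i corresponds to i-1 here. *)

datatype sharp = St | Mx

definition mrank :: "real mat \<Rightarrow> nat" where
  "mrank A = vec_space.rank (dim_row A) A"

definition hcat :: "'a mat \<Rightarrow> 'a mat \<Rightarrow> 'a mat" where
  "hcat A B = mat (dim_row A) (dim_col A + dim_col B)
     (\<lambda>(i,j). if j < dim_col A then A $$ (i,j) else B $$ (i, j - dim_col A))"

definition vecm :: "'a mat \<Rightarrow> 'a vec" where
  "vecm X = vec (dim_row X * dim_col X) (\<lambda>k. X $$ (k mod dim_row X, k div dim_row X))"

definition topleft :: "nat \<Rightarrow> 'a mat \<Rightarrow> 'a mat" where
  "topleft D A = mat D D (\<lambda>(i,j). A $$ (i,j))"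

definition compatible ::
  "nat \<Rightarrow> nat \<Rightarrow> nat \<Rightarrow> real mat \<Rightarrow> sharp \<Rightarrow> nat \<Rightarrow> (nat \<Rightarrow> nat \<times> nat) \<Rightarrow> (nat \<Rightarrow> real)
   \<Rightarrow> real mat \<Rightarrow> bool" where
  "compatible D W VK Dm s J \<theta> c G \<longleftrightarrow>
     (\<exists>Pst Pm. Pst \<in> carrier_mat D W \<and> Pm \<in> carrier_mat D VK \<and>
        G = transpose_mat (hcat Pst Pm) * hcat Pst Pm \<and>
        transpose_mat Pst * Pm = Dm \<and>
        (\<forall>j<J. (if s = St then transpose_mat Pst * Pst else transpose_mat Pm * Pm) $$ \<theta> j = c j))"

definition Nmat :: "nat \<Rightarrow> real mat \<Rightarrow> sharp \<Rightarrow> nat \<times> nat \<Rightarrow> real mat" where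
  "Nmat D Dm s ab = (case ab of (a,b) \<Rightarrow>
     (if s = St then
        mat D D (\<lambda>(i,l). (Dm $$ (a,i) * Dm $$ (b,l) + Dm $$ (b,i) * Dm $$ (a,l)) / 2)
      else
        mat D D (\<lambda>(i,l). (Dm $$ (i,a) * Dm $$ (l,b) + Dm $$ (i,b) * Dm $$ (l,a)) / 2)))"

definition Mmat :: "nat \<Rightarrow> real mat \<Rightarrow> sharp \<Rightarrow> nat \<Rightarrow> (nat \<Rightarrow> nat \<times> nat) \<Rightarrow> real mat" where
  "Mmat D Dm s J \<theta> = mat_of_cols (D * D) (map (\<lambda>j. vecm (Nmat D Dm s (\<theta> j))) [0..<J])"

end

theory Submission
  imports Defs "Jordan_Normal_Form.Gram_Schmidt" "Jordan_Normal_Form.DL_Rank_Submatrix"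
begin


context vec_space
begin

lemma rank_le_span:
  assumes xs: "set xs \<subseteq> carrier_vec n" and ys: "set ys \<subseteq> carrier_vec n"
    and sub: "set xs \<subseteq> span (set ys)"
  shows "rank (mat_of_cols n xs) \<le> rank (mat_of_cols n ys)"
proof -
  have cx: "cols (mat_of_cols n xs) = xs" using xs by simp
  have cy: "cols (mat_of_cols n ys) = ys" using ys by simp
  have sub2: "span (set xs) \<subseteq> span (set ys)"
    using span_is_subset[OF sub span_is_submodule[OF ys]] .
  have vsY: "vectorspace class_ring (vs (span (set ys)))"
    using span_is_subspace[OF ys] subspace_is_vs by auto
  have ss: "VectorSpace.subspace class_ring (span (set xs)) (vs (span (set ys)))"
    using nested_subspaces[OF span_is_subspace[OF ys] span_is_subspace[OF xs] sub2] .
  have "vectorspace.dim class_ring ((vs (span (set ys)))\<lparr>carrier := span (set xs)\<rparr>) \<le> vectorspace.dim class_ring (vs (span (set ys)))"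
    using vectorspace.subspace_dim[OF vsY ss] fin_dim_span[of "set ys"] fin_dim_span[of "set xs"] xs ys
    by simp
  thus ?thesis unfolding rank_def cx cy by simp
qed

lemma maxli_exists:
  assumes cs: "set cs \<subseteq> carrier_vec n"
  shows "\<exists>ws. distinct ws \<and> set ws \<subseteq> set cs \<and> lin_indpt (set ws) \<and> set cs \<subseteq> span (set ws)
     \<and> rank (mat_of_cols n cs) = length ws"
proof -
  obtain S where max: "maximal S (\<lambda>T. T \<subseteq> set cs \<and> lin_indpt T)"
    using maximal_exists[of "(\<lambda>T. T \<subseteq> set cs \<and> lin_indpt T)" "card (set cs)" "{}"]
    by (meson List.finite_set card_mono empty_iff empty_subsetI finite_lin_indpt2 rev_finite_subset)
  have A: "mat_of_cols n cs \<in> carrier_mat n (length cs)" by simp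
  have cc: "cols (mat_of_cols n cs) = cs" using cs by simp
  have rk: "rank (mat_of_cols n cs) = card S"
    using rank_card_indpt[OF A] max cc by simp
  have SU: "S \<subseteq> set cs" "lin_indpt S" using max unfolding maximal_def by auto
  have fin: "finite S" using SU(1) finite_subset by blast
  have Sc: "S \<subseteq> carrier_vec n" using SU cs by blast
  have spn: "set cs \<subseteq> span S"
  proof
    fix s assume s: "s \<in> set cs"
    show "s \<in> span S"
    proof (rule ccontr)
      assume ns: "s \<notin> span S"
      have sS: "s \<notin> S" using ns span_mem[OF Sc] by auto
      have sc: "s \<in> carrier_vec n" using s cs by auto
      have "lin_indpt (S \<union> {s})"
        using lin_dep_iff_in_span[OF Sc SU(2) _ sS] ns sc by auto
      moreover have "S \<union> {s} \<subseteq> set cs" using SU s by auto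
      ultimately have "S \<union> {s} = S" using max unfolding maximal_def by blast
      thus False using sS by auto
    qed
  qed
  obtain ws where ws: "set ws = S" "distinct ws" using finite_distinct_list[OF fin] by blast
  show ?thesis
    apply (rule exI[of _ ws])
    using ws SU spn rk distinct_card[OF ws(2)] by auto
qed

end


definition symv :: "nat \<Rightarrow> 'a vec \<Rightarrow> bool" where
  "symv D f = (\<forall>i<D. \<forall>l<D. f $ (i + l*D) = f $ (l + i*D))"

definition ebas :: "nat \<Rightarrow> nat \<Rightarrow> nat \<Rightarrow> 'a::zero_neq_one vec" where
  "ebas D i l = vec (D*D) (\<lambda>k. if (k mod D = i \<and> k div D = l) \<or> (k mod D = l \<and> k div D = i) then 1 else 0)"

definition pairsL :: "nat \<Rightarrow> (nat \<times> nat) list" where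
  "pairsL D = concat (map (\<lambda>l. map (\<lambda>i. (i,l)) [0..<Suc l]) [0..<D])"

definition bsL :: "nat \<Rightarrow> 'a::zero_neq_one vec list" where
  "bsL D = map (\<lambda>(i,l). ebas D i l) (pairsL D)"

lemma set_pairsL: "set (pairsL D) = {(i,l). i \<le> l \<and> l < D}"
proof
  show "set (pairsL D) \<subseteq> {(i,l). i \<le> l \<and> l < D}" unfolding pairsL_def by auto
  show "{(i,l). i \<le> l \<and> l < D} \<subseteq> set (pairsL D)"
  proof clarify
    fix i l assume "i \<le> l" "l < D"
    thus "(i,l) \<in> set (pairsL D)" unfolding pairsL_def by (auto intro!: bexI[of _ l])
  qed
qed

lemma pairsL_Suc: "pairsL (Suc D) = pairsL D @ map (\<lambda>i. (i,D)) [0..<Suc D]"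
  unfolding pairsL_def by simp

lemma distinct_pairsL: "distinct (pairsL D)"
proof (induct D)
  case 0 thus ?case by (simp add: pairsL_def)
next
  case (Suc D)
  show ?case unfolding pairsL_Suc using Suc set_pairsL[of D]
    by (auto simp: distinct_map inj_on_def)
qed

lemma length_pairsL2: "2 * length (pairsL D) = D * (D+1)"
proof (induct D)
  case 0 thus ?case by (simp add: pairsL_def)
next
  case (Suc D)
  show ?case unfolding pairsL_Suc using Suc by (simp add: algebra_simps)
qed

lemma length_pairsL: "length (pairsL D) = D * (D+1) div 2"
  using length_pairsL2[of D] by simp

lemma idx_mod: "i < D \<Longrightarrow> (i + l*D) mod (D::nat) = i" by simp
lemma idx_div: "i < D \<Longrightarrow> (i + l*D) div (D::nat) = l" by simp

lemma idx_lt: "i < D \<Longrightarrow> l < D \<Longrightarrow> i + l*D < D*(D::nat)"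
proof -
  assume a: "i < D" "l < D"
  have "i + l*D < D + l*D" using a by simp
  also have "\<dots> = (Suc l) * D" by simp
  also have "\<dots> \<le> D * D" using mult_le_mono1[of "Suc l" D D] a by simp
  finally show ?thesis .
qed

lemma ebas_idx:
  assumes "i < D" "l < D"
  shows "ebas D i' l' $ (i + l*D) = (if (i = i' \<and> l = l') \<or> (i = l' \<and> l = i') then 1 else 0)"
  unfolding ebas_def using assms by (simp add: idx_lt idx_mod idx_div)

lemma ebas_carrier[simp]: "ebas D i l \<in> carrier_vec (D*D)"
  unfolding ebas_def by simp

lemma symv_ebas: "symv D (ebas D i l)"
  unfolding symv_def by (auto simp: ebas_idx)

lemma bsL_carrier: "set (bsL D) \<subseteq> carrier_vec (D*D)"
  unfolding bsL_def by auto

lemma bsL_sym: "\<forall>b \<in> set (bsL D). symv D b"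
  unfolding bsL_def using symv_ebas by auto

lemma ebas_inj:
  assumes "i \<le> l" "l < D" "i' \<le> l'" "l' < D" "(ebas D i l :: 'a::zero_neq_one vec) = ebas D i' l'"
  shows "i = i' \<and> l = l'"
proof -
  have il: "i < D" "l < D" using assms by auto
  have "(ebas D i l :: 'a vec) $ (i + l*D) = 1" using ebas_idx[OF il, of i l] by simp
  hence "(ebas D i' l' :: 'a vec) $ (i + l*D) = 1" using assms(5) by simp
  hence "(i = i' \<and> l = l') \<or> (i = l' \<and> l = i')" using ebas_idx[OF il, of i' l'] 
    by (metis zero_neq_one)
  thus ?thesis using assms(1,3) by auto
qed

lemma inj_ebas: "inj_on (\<lambda>(i,l). (ebas D i l :: 'a::zero_neq_one vec)) {(i,l). i \<le> l \<and> l < D}"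
  unfolding inj_on_def
proof clarify
  fix a b c d assume "a \<le> b" "b < D" "c \<le> d" "d < D" "(ebas D a b :: 'a vec) = ebas D c d"
  from ebas_inj[OF this] show "a = c \<and> b = d" .
qed

lemma distinct_bsL: "distinct (bsL D :: 'a::zero_neq_one vec list)"
  unfolding bsL_def distinct_map using distinct_pairsL inj_ebas set_pairsL by metis

lemma length_bsL: "length (bsL D) = D * (D+1) div 2"
  unfolding bsL_def by (simp add: length_pairsL)


lemma ebas_idx2:
  assumes "i \<le> l" "l < D" "i' \<le> l'" "l' < D"
  shows "ebas D i' l' $ (i + l*D) = (if i = i' \<and> l = l' then 1 else 0)"
  using assms by (subst ebas_idx) auto

lemma mem_bsL: "x \<in> set (bsL D) \<longleftrightarrow> (\<exists>i l. i \<le> l \<and> l < D \<and> x = ebas D i l)"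
  unfolding bsL_def using set_pairsL[of D] by auto

lemma bsL_idx:
  assumes x: "x \<in> set (bsL D)" and il: "i \<le> l" "l < D"
  shows "x $ (i + l*D) = (if x = ebas D i l then 1 else 0)"
proof -
  from x obtain i' l' where x': "i' \<le> l'" "l' < D" "x = ebas D i' l'" unfolding mem_bsL by auto
  show ?thesis
  proof (cases "i = i' \<and> l = l'")
    case True thus ?thesis using x' il ebas_idx2[of i l D i l] by simp
  next
    case False
    hence "x \<noteq> ebas D i l" using ebas_inj[of i' l' D i l] x' il by auto
    thus ?thesis using False x' il ebas_idx2[of i l D i' l'] by auto
  qed
qed

context vec_space
begin

lemma bsL_li:
  assumes n: "n = D*D"
  shows "lin_indpt (set (bsL D))"
proof
  assume "lin_dep (set (bsL D))"
  from this[unfolded lin_dep_def] obtain A a v where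
      fin: "finite A" and A: "A \<subseteq> set (bsL D)"
      and lc: "lincomb a A = 0\<^sub>v n" and v: "v \<in> A" and av: "a v \<noteq> 0"
      by auto
  have "v \<in> set (bsL D)" using v A by auto
  then obtain i l where il: "i \<le> l" "l < D" "v = ebas D i l" unfolding mem_bsL by auto
  have k: "i + l*D < n" using il n idx_lt[of i D l] by auto
  have Ac: "A \<subseteq> carrier_vec n" using A bsL_carrier n by blast
  have "lincomb a A $ (i + l*D) = (\<Sum>x\<in>A. a x * x $ (i + l*D))"
    using lincomb_index[OF k Ac] .
  also have "\<dots> = (\<Sum>x\<in>A. if x = v then a x else 0)"
    by (rule sum.cong, simp, insert A il, auto simp: bsL_idx)
  also have "\<dots> = a v" using fin v by simp
  finally have "a v = 0" using lc k by simp
  thus False using av by simp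
qed

lemma sym_in_span_bsL:
  assumes n: "n = D*D" and f: "f \<in> carrier_vec n" and s: "symv D f"
  shows "f \<in> span (set (bsL D))"
proof -
  define P where "P = {(i,l). i \<le> l \<and> l < D}"
  define eb where "eb = (\<lambda>(i,l). (ebas D i l :: 'a vec))"
  have inj: "inj_on eb P" unfolding eb_def P_def by (rule inj_ebas)
  have setb: "set (bsL D) = eb ` P" unfolding bsL_def eb_def P_def set_pairsL[symmetric] by simp
  define a where "a = (\<lambda>x. f $ (fst (inv_into P eb x) + snd (inv_into P eb x) * D))"
  have aeb: "\<And>p. p \<in> P \<Longrightarrow> a (eb p) = f $ (fst p + snd p * D)"
    unfolding a_def using inv_into_f_f[OF inj] by simp
  have bc: "set (bsL D) \<subseteq> carrier_vec n" using bsL_carrier n by simp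
  have finb: "finite (set (bsL D))" by simp
  have "f = lincomb a (set (bsL D))"
  proof (rule eq_vecI)
    show "dim_vec f = dim_vec (lincomb a (set (bsL D)))"
      using f lincomb_closed[OF bc, of a] by (metis carrier_vecD)
    fix k assume "k < dim_vec (lincomb a (set (bsL D)))"
    hence kn: "k < n" using lincomb_closed[OF bc, of a] by (metis carrier_vecD)
    define p where "p = k mod D"
    define q where "q = k div D"
    have Dpos: "0 < D" using kn n by (cases D) auto
    have pD: "p < D" unfolding p_def using Dpos by simp
    have qD: "q < D" unfolding q_def using kn n by (simp add: less_mult_imp_div_less)
    have kpq: "k = p + q*D" unfolding p_def q_def by simp
    have fk: "f $ (min p q + max p q * D) = f $ k"
      using s pD qD unfolding symv_def kpq by (cases "p \<le> q") (auto simp: min_def max_def)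
    have "lincomb a (set (bsL D)) $ k = (\<Sum>x\<in>set (bsL D). a x * x $ k)"
      using lincomb_index[OF kn bc] .
    also have "\<dots> = (\<Sum>x\<in>P. a (eb x) * eb x $ k)"
      unfolding setb by (rule sum.reindex[OF inj, unfolded comp_def])
    also have "\<dots> = (\<Sum>x\<in>P. if x = (min p q, max p q) then f $ k else 0)"
    proof (rule sum.cong, simp)
      fix x assume x: "x \<in> P"
      obtain i' l' where x': "x = (i',l')" "i' \<le> l'" "l' < D" using x unfolding P_def by auto
      have "eb x $ k = (if (p = i' \<and> q = l') \<or> (p = l' \<and> q = i') then 1 else 0)"
      proof -
        have "eb x $ k = ebas D i' l' $ (p + q*D)" using kpq x' eb_def by simp
        thus ?thesis using ebas_idx[OF pD qD, of i' l'] by simp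
      qed
      also have "\<dots> = (if x = (min p q, max p q) then 1 else 0)"
      proof -
        have "((p = i' \<and> q = l') \<or> (p = l' \<and> q = i')) \<longleftrightarrow> x = (min p q, max p q)"
          unfolding x'(1) prod.inject using x'(2) by arith
        thus ?thesis by simp
      qed
      finally show "a (eb x) * eb x $ k = (if x = (min p q, max p q) then f $ k else 0)"
        using aeb[OF x] fk x' by auto
    qed
    also have "\<dots> = f $ k"
    proof -
      have finP: "finite P" unfolding P_def
        by (rule finite_subset[of _ "{..<D} \<times> {..<D}"]) auto
      have mem: "(min p q, max p q) \<in> P" unfolding P_def using pD qD by auto
      show ?thesis using sum.delta[OF finP, of "(min p q, max p q)" "\<lambda>_. f $ k"] mem by simp
    qed
    finally show "f $ k = lincomb a (set (bsL D)) $ k" by simp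
  qed
  moreover have "lincomb a (set (bsL D)) \<in> span (set (bsL D))"
    unfolding finite_span[OF finb bc] by auto
  ultimately show ?thesis by simp
qed

lemma span_symv:
  assumes n: "n = D*D" and A: "set xs \<subseteq> carrier_vec n" and s: "\<forall>x\<in>set xs. symv D x"
    and v: "v \<in> span (set xs)"
  shows "symv D v"
proof -
  from v obtain a where va: "v = lincomb a (set xs)"
    unfolding finite_span[OF finite_set A] by auto
  show ?thesis unfolding symv_def
  proof (intro allI impI)
    fix i l assume il: "i < D" "l < D"
    have k1: "i + l*D < n" and k2: "l + i*D < n" using il n idx_lt by auto
    show "v $ (i + l * D) = v $ (l + i * D)"
      unfolding va lincomb_index[OF k1 A] lincomb_index[OF k2 A]
      by (rule sum.cong, simp, insert s il, auto simp: symv_def)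
  qed
qed

lemma span_orth:
  assumes A: "set xs \<subseteq> carrier_vec n" and f: "f \<in> carrier_vec n"
    and o: "\<forall>x\<in>set xs. x \<bullet> f = 0"
    and v: "v \<in> span (set xs)"
  shows "v \<bullet> f = 0"
proof -
  from v obtain a where va: "v = lincomb a (set xs)"
    unfolding finite_span[OF finite_set A] by auto
  have "v \<bullet> f = (\<Sum>k\<in>{0..<n}. v $ k * f $ k)"
    unfolding scalar_prod_def using f by simp
  also have "\<dots> = (\<Sum>k\<in>{0..<n}. (\<Sum>x\<in>set xs. a x * x $ k) * f $ k)"
    by (rule sum.cong, simp, simp add: va lincomb_index[OF _ A])
  also have "\<dots> = (\<Sum>x\<in>set xs. a x * (\<Sum>k\<in>{0..<n}. x $ k * f $ k))"
  proof -
    have "(\<Sum>k\<in>{0..<n}. (\<Sum>x\<in>set xs. a x * x $ k) * f $ k) = (\<Sum>k\<in>{0..<n}. \<Sum>x\<in>set xs. a x * (x $ k * f $ k))"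
      by (simp add: sum_distrib_right mult.assoc)
    also have "\<dots> = (\<Sum>x\<in>set xs. \<Sum>k\<in>{0..<n}. a x * (x $ k * f $ k))"
      by (rule sum.swap)
    also have "\<dots> = (\<Sum>x\<in>set xs. a x * (\<Sum>k\<in>{0..<n}. x $ k * f $ k))"
      by (simp add: sum_distrib_left)
    finally show ?thesis .
  qed
  also have "\<dots> = 0"
  proof (rule sum.neutral, clarify)
    fix x assume x: "x \<in> set xs"
    have "(\<Sum>k\<in>{0..<n}. x $ k * f $ k) = x \<bullet> f" unfolding scalar_prod_def using f by simp
    thus "a x * (\<Sum>k\<in>{0..<n}. x $ k * f $ k) = 0" using o x by simp
  qed
  finally show ?thesis .
qed

end


lemma conj_real_vec: "conjugate (w :: real vec) = w"
  by (rule eq_vecI) auto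

lemma gs_sub_append: "gram_schmidt_sub n us (ws @ [b]) = gram_schmidt_sub n (gram_schmidt_sub n us ws) [b]"
  by (induct ws arbitrary: us) auto

lemma gs_append: "\<exists>x. gram_schmidt n (ws @ [b]) = gram_schmidt n ws @ [x]"
  unfolding gram_schmidt_def gs_sub_append by simp

lemma orth_rank:
  fixes cs :: "real vec list"
  assumes cs: "set cs \<subseteq> carrier_vec (D*D)" and sym: "\<forall>c\<in>set cs. symv D c"
  shows "vec_space.rank (D*D) (mat_of_cols (D*D) cs) = D*(D+1) div 2 \<longleftrightarrow>
    (\<forall>f \<in> carrier_vec (D*D). symv D f \<longrightarrow> (\<forall>c\<in>set cs. c \<bullet> f = 0) \<longrightarrow> f = 0\<^sub>v (D*D))"
proof -
  interpret V: cof_vec_space "D*D" "TYPE(real)" .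
  define ns where "ns = D*(D+1) div 2"
  define bs where "bs = (bsL D :: real vec list)"
  have bc: "set bs \<subseteq> carrier_vec (D*D)" unfolding bs_def by (rule bsL_carrier)
  have bsym: "\<forall>b\<in>set bs. symv D b" unfolding bs_def by (rule bsL_sym)
  have rbs: "V.rank (mat_of_cols (D*D) bs) = ns"
  proof -
    have "V.rank (mat_of_cols (D*D) bs) = length bs"
      using V.lin_indpt_full_rank[OF mat_of_cols_carrier(1)] bc distinct_bsL[of D, where 'a=real]
      V.bsL_li[of D] unfolding bs_def by simp
    thus ?thesis using length_bsL[of D, where 'a=real] unfolding bs_def ns_def by simp
  qed
  have symspan: "\<And>f. f \<in> carrier_vec (D*D) \<Longrightarrow> symv D f \<Longrightarrow> f \<in> V.span (set bs)"
    unfolding bs_def by (rule V.sym_in_span_bsL) auto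
  obtain ws where ws: "distinct ws" "set ws \<subseteq> set cs" "V.lin_indpt (set ws)" "set cs \<subseteq> V.span (set ws)"
    "V.rank (mat_of_cols (D*D) cs) = length ws"
    using V.maxli_exists[OF cs] by blast
  have wc: "set ws \<subseteq> carrier_vec (D*D)" using ws(2) cs by auto
  have wsym: "\<forall>w\<in>set ws. symv D w" using ws(2) sym by auto
  have rws: "V.rank (mat_of_cols (D*D) ws) = length ws"
    using V.lin_indpt_full_rank[OF mat_of_cols_carrier(1)] wc ws(1,3) by simp
  have wsbs: "set ws \<subseteq> V.span (set bs)" using wc wsym symspan by auto
  have kle: "length ws \<le> ns"
    using V.rank_le_span[OF wc bc wsbs] rws rbs by simp
  show ?thesis unfolding ns_def[symmetric] ws(5)
  proof
    assume k: "length ws = ns"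
    show "\<forall>f \<in> carrier_vec (D*D). symv D f \<longrightarrow> (\<forall>c\<in>set cs. c \<bullet> f = 0) \<longrightarrow> f = 0\<^sub>v (D*D)"
    proof (intro ballI impI, rule ccontr)
      fix f :: "real vec" assume f: "f \<in> carrier_vec (D*D)" and fs: "symv D f"
        and fo: "\<forall>c\<in>set cs. c \<bullet> f = 0" and fnz: "f \<noteq> 0\<^sub>v (D*D)"
      have nsp: "f \<notin> V.span (set ws)"
      proof
        assume "f \<in> V.span (set ws)"
        hence "f \<bullet> f = 0" using V.span_orth[OF wc f] fo ws(2) by auto
        thus False using conjugate_square_eq_0_vec[OF f] fnz by (simp add: conj_real_vec)
      qed
      have fnw: "f \<notin> set ws" using nsp V.span_mem[OF wc] by auto
      have li: "V.lin_indpt (set ws \<union> {f})"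
        using V.lin_dep_iff_in_span[OF wc ws(3) _ fnw] f nsp by simp
      have c2: "set (f # ws) \<subseteq> carrier_vec (D*D)" using wc f by auto
      have "V.rank (mat_of_cols (D*D) (f # ws)) = length (f # ws)"
        using V.lin_indpt_full_rank[OF mat_of_cols_carrier(1)] c2 ws(1) fnw li
        by (simp add: Un_commute)
      moreover have "V.rank (mat_of_cols (D*D) (f # ws)) \<le> ns"
        using V.rank_le_span[OF c2 bc] wsbs symspan[OF f fs] rbs by simp
      ultimately show False using k by simp
    qed
  next
    assume orth: "\<forall>f \<in> carrier_vec (D*D). symv D f \<longrightarrow> (\<forall>c\<in>set cs. c \<bullet> f = 0) \<longrightarrow> f = 0\<^sub>v (D*D)"
    show "length ws = ns"
    proof (rule ccontr)
      assume "length ws \<noteq> ns"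
      hence klt: "length ws < ns" using kle by simp
      have "\<not> set bs \<subseteq> V.span (set ws)"
      proof
        assume "set bs \<subseteq> V.span (set ws)"
        hence "ns \<le> length ws" using V.rank_le_span[OF bc wc] rbs rws by simp
        thus False using klt by simp
      qed
      then obtain b where b: "b \<in> set bs" "b \<notin> V.span (set ws)" by auto
      have bcar: "b \<in> carrier_vec (D*D)" using b bc by auto
      have bnw: "b \<notin> set ws" using b V.span_mem[OF wc] by auto
      have wbc: "set (ws @ [b]) \<subseteq> carrier_vec (D*D)" using wc bcar by auto
      have wbd: "distinct (ws @ [b])" using ws(1) bnw by simp
      have wbli: "V.lin_indpt (set (ws @ [b]))"
        using V.lin_dep_iff_in_span[OF wc ws(3) bcar bnw] b by simp
      define gws where "gws = gram_schmidt (D*D) ws"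
      obtain x where us: "gram_schmidt (D*D) (ws @ [b]) = gws @ [x]"
        using gs_append unfolding gws_def by blast
      note GR = V.gram_schmidt_result[OF wbc wbd wbli us[symmetric]]
      note GW = V.gram_schmidt_result[OF wc ws(1) ws(3) gws_def]
      have xc: "x \<in> carrier_vec (D*D)" using GR(3) by simp
      have lg: "length gws = length ws" using GW(4) .
      have xx: "x \<bullet>c x \<noteq> 0"
        using corthogonalD[OF GR(2), of "length gws" "length gws"] by simp
      have xo: "\<forall>y\<in>set gws. y \<bullet> x = 0"
      proof
        fix y assume "y \<in> set gws"
        then obtain i where i: "i < length gws" "y = gws ! i" by (auto simp: in_set_conv_nth)
        have "(gws @ [x]) ! i \<bullet>c (gws @ [x]) ! length gws = 0"
          using corthogonalD[OF GR(2), of i "length gws"] i by simp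
        thus "y \<bullet> x = 0" using i by (simp add: nth_append conj_real_vec)
      qed
      have gwc: "set gws \<subseteq> carrier_vec (D*D)" using GW(3) .
      have xsym: "symv D x"
      proof (rule V.span_symv[OF refl wbc])
        show "\<forall>y\<in>set (ws @ [b]). symv D y" using wsym bsym b by auto
        have "x \<in> V.span (set (gws @ [x]))" using V.span_mem GR(3) by simp
        thus "x \<in> V.span (set (ws @ [b]))" using GR(1) by simp
      qed
      have xcs: "\<forall>c\<in>set cs. c \<bullet> x = 0"
      proof
        fix c assume "c \<in> set cs"
        hence "c \<in> V.span (set gws)" using ws(4) GW(1) by auto
        thus "c \<bullet> x = 0" using V.span_orth[OF gwc xc xo] by simp
      qed
      have "x = 0\<^sub>v (D*D)" using orth xc xsym xcs by blast
      thus False using xx by (simp add: conj_real_vec)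
    qed
  qed
qed


definition symf :: "nat \<Rightarrow> (nat \<Rightarrow> nat \<Rightarrow> real) \<Rightarrow> bool" where
  "symf n K = (\<forall>i<n. \<forall>j<n. K i j = K j i)"

definition qf :: "nat \<Rightarrow> (nat \<Rightarrow> nat \<Rightarrow> real) \<Rightarrow> (nat \<Rightarrow> real) \<Rightarrow> real" where
  "qf n K v = (\<Sum>i<n. \<Sum>j<n. v i * K i j * v j)"

definition pdf :: "nat \<Rightarrow> (nat \<Rightarrow> nat \<Rightarrow> real) \<Rightarrow> bool" where
  "pdf n K = (\<forall>v. (\<exists>i<n. v i \<noteq> 0) \<longrightarrow> 0 < qf n K v)"

lemma qf_Suc:
  fixes K :: "nat \<Rightarrow> nat \<Rightarrow> real"
  shows "qf (Suc m) K v = qf m K v + (\<Sum>i<m. v i * K i m) * v m + v m * (\<Sum>j<m. K m j * v j) + v m * K m m * v m"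
proof -
  have "qf (Suc m) K v = (\<Sum>i<m. (\<Sum>j<m. v i * K i j * v j) + v i * K i m * v m) + ((\<Sum>j<m. v m * K m j * v j) + v m * K m m * v m)"
    unfolding qf_def by simp
  also have "\<dots> = qf m K v + (\<Sum>i<m. v i * K i m) * v m + v m * (\<Sum>j<m. K m j * v j) + v m * K m m * v m"
    unfolding qf_def by (simp add: sum.distrib sum_distrib_left sum_distrib_right mult.assoc)
  finally show ?thesis .
qed

lemma chol_step_pd:
  fixes K :: "nat \<Rightarrow> nat \<Rightarrow> real"
  assumes s: "symf (Suc m) K" and pd: "pdf (Suc m) K"
  defines "p \<equiv> K m m"
  defines "K' \<equiv> (\<lambda>i j. K i j - K i m * K m j / p)"
  shows "0 < p" "symf m K'" "pdf m K'"
proof -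
  have "0 < qf (Suc m) K (\<lambda>i. if i = m then 1 else 0)"
    by (rule pd[unfolded pdf_def, rule_format], rule exI[of _ m], simp)
  moreover have "qf (Suc m) K (\<lambda>i. if i = m then 1 else 0) = p"
    unfolding qf_Suc p_def by (simp add: qf_def)
  ultimately show pp: "0 < p" by simp
  show "symf m K'" using s unfolding symf_def K'_def by (simp add: mult.commute)
  show "pdf m K'"
    unfolding pdf_def
  proof (intro allI impI)
    fix v :: "nat \<Rightarrow> real" assume "\<exists>i<m. v i \<noteq> 0"
    then obtain i0 where i0: "i0 < m" "v i0 \<noteq> 0" by auto
    define sv where "sv = (\<Sum>j<m. K m j * v j)"
    define w where "w = (\<lambda>i. if i < m then v i else if i = m then - sv / p else 0)"
    have "\<exists>i<Suc m. w i \<noteq> 0" using i0 unfolding w_def by (intro exI[of _ i0]) auto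
    hence pos: "0 < qf (Suc m) K w" by (rule pd[unfolded pdf_def, rule_format])
    have wm: "w m = - sv / p" unfolding w_def by simp
    have qw: "qf m K w = qf m K v" unfolding qf_def w_def by (rule sum.cong, simp, rule sum.cong, auto)
    have s1: "(\<Sum>i<m. w i * K i m) = sv"
      unfolding sv_def w_def using s unfolding symf_def by (intro sum.cong) (auto simp: mult.commute)
    have s2: "(\<Sum>j<m. K m j * w j) = sv"
      unfolding sv_def w_def by (intro sum.cong) auto
    have "qf (Suc m) K w = qf m K v + sv * (- sv / p) + (- sv / p) * sv + (- sv / p) * p * (- sv / p)"
      unfolding qf_Suc qw s1 s2 wm p_def by simp
    also have "\<dots> = qf m K v - sv * sv / p" using pp by (simp add: field_simps)
    finally have e1: "qf (Suc m) K w = qf m K v - sv * sv / p" .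
    have "qf m K' v = (\<Sum>i<m. \<Sum>j<m. v i * K i j * v j - (v i * K i m) * (K m j * v j) / p)"
      unfolding qf_def K'_def by (rule sum.cong, simp, rule sum.cong, simp, simp add: algebra_simps)
    also have "\<dots> = qf m K v - (\<Sum>i<m. \<Sum>j<m. (v i * K i m) * (K m j * v j)) / p"
      unfolding qf_def by (simp add: sum_subtractf sum_divide_distrib)
    also have "(\<Sum>i<m. \<Sum>j<m. (v i * K i m) * (K m j * v j)) = (\<Sum>i<m. v i * K i m) * sv"
      unfolding sv_def sum_product by (rule refl)
    also have "(\<Sum>i<m. v i * K i m) = sv"
      unfolding sv_def using s unfolding symf_def by (intro sum.cong) (auto simp: mult.commute)
    finally have e2: "qf m K' v = qf m K v - sv * sv / p" .
    show "0 < qf m K' v" using pos e1 e2 by simp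
  qed
qed

lemma cholesky_fun:
  fixes K :: "nat \<Rightarrow> nat \<Rightarrow> real"
  assumes "symf n K" "pdf n K"
  shows "\<exists>L. \<forall>i<n. \<forall>j<n. K i j = (\<Sum>k<n. L k i * L k j)"
  using assms
proof (induct n arbitrary: K)
  case 0 thus ?case by simp
next
  case (Suc m K)
  define p where "p = K m m"
  define K' where "K' = (\<lambda>i j. K i j - K i m * K m j / p)"
  have st: "0 < p" "symf m K'" "pdf m K'"
    using chol_step_pd[OF Suc(2,3)] unfolding p_def K'_def by auto
  have "\<exists>L. \<forall>i<m. \<forall>j<m. K' i j = (\<Sum>k<m. L k i * L k j)"
    by (rule Suc(1)[OF st(2,3)])
  then obtain L' where L': "\<forall>i<m. \<forall>j<m. K' i j = (\<Sum>k<m. L' k i * L' k j)" ..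
  define L where "L = (\<lambda>k i. if k < m then (if i < m then L' k i else 0) else K m i / sqrt p)"
  have sq: "sqrt p * sqrt p = p" using st(1) by simp
  have sy: "\<And>i. i < Suc m \<Longrightarrow> K i m = K m i" using Suc(2) unfolding symf_def by auto
  show ?case
  proof (intro exI[of _ L] allI impI)
    fix i j assume i: "i < Suc m" and j: "j < Suc m"
    have "(\<Sum>k<Suc m. L k i * L k j) = (\<Sum>k<m. L k i * L k j) + K m i * K m j / p"
      unfolding L_def using sq by (simp add: field_simps)
    also have "(\<Sum>k<m. L k i * L k j) = (if i < m \<and> j < m then K' i j else 0)"
      using L' unfolding L_def by (auto intro: sum.neutral)
    finally have e: "(\<Sum>k<Suc m. L k i * L k j) = (if i < m \<and> j < m then K' i j else 0) + K m i * K m j / p" .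
    show "K i j = (\<Sum>k<Suc m. L k i * L k j)"
    proof (cases "i < m \<and> j < m")
      case True thus ?thesis unfolding e K'_def using sy[OF i] by (simp add: mult.commute)
    next
      case False
      hence "i = m \<or> j = m" using i j by auto
      thus ?thesis unfolding e using False st(1) sy[OF i] sy[OF j] unfolding p_def by auto
    qed
  qed
qed


lemma inv_exists:
  fixes A :: "real mat"
  assumes A: "A \<in> carrier_mat n n" and d: "det A \<noteq> 0"
  shows "\<exists>B. B \<in> carrier_mat n n \<and> B * A = 1\<^sub>m n \<and> A * B = 1\<^sub>m n"
proof -
  have "A \<in> Units (ring_mat TYPE(real) n undefined)" by (rule det_non_zero_imp_unit[OF A d])
  thus ?thesis unfolding Units_def by (auto simp: ring_mat_simps)
qed

lemma abs_mult_le_sumsq: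
  fixes v :: "nat \<Rightarrow> real"
  assumes "i < n" "j < n"
  shows "\<bar>v i\<bar> * \<bar>v j\<bar> \<le> (\<Sum>k<n. v k * v k)"
proof -
  have a: "v i * v i \<le> (\<Sum>k<n. v k * v k)"
    using member_le_sum[of i "{..<n}" "\<lambda>k. v k * v k"] assms by simp
  have b: "v j * v j \<le> (\<Sum>k<n. v k * v k)"
    using member_le_sum[of j "{..<n}" "\<lambda>k. v k * v k"] assms by simp
  have "\<bar>v i\<bar> * \<bar>v j\<bar> \<le> (v i * v i + v j * v j) / 2"
  proof -
    have "0 \<le> (\<bar>v i\<bar> - \<bar>v j\<bar>)^2" by simp
    thus ?thesis by (simp add: power2_eq_square algebra_simps abs_mult_self_eq)
  qed
  thus ?thesis using a b by simp
qed

lemma pd_near_id: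
  fixes E :: "nat \<Rightarrow> nat \<Rightarrow> real"
  assumes s: "symf n E"
  defines "M \<equiv> (\<Sum>i<n. \<Sum>j<n. \<bar>E i j\<bar>)"
  defines "t \<equiv> 1 / (2 * (1 + M))"
  shows "0 < t" "symf n (\<lambda>i j. (if i = j then 1 else 0) + t * E i j)"
    "pdf n (\<lambda>i j. (if i = j then 1 else 0) + t * E i j)"
proof -
  have M0: "0 \<le> M" unfolding M_def by (intro sum_nonneg) auto
  show tp: "0 < t" unfolding t_def using M0 by simp
  show "symf n (\<lambda>i j. (if i = j then 1 else 0) + t * E i j)" using s unfolding symf_def by auto
  show "pdf n (\<lambda>i j. (if i = j then 1 else 0) + t * E i j)"
    unfolding pdf_def
  proof (intro allI impI)
    fix v :: "nat \<Rightarrow> real" assume "\<exists>i<n. v i \<noteq> 0"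
    then obtain i0 where i0: "i0 < n" "v i0 \<noteq> 0" by auto
    define S where "S = (\<Sum>k<n. v k * v k)"
    have Spos: "0 < S" unfolding S_def
    proof -
      have "0 < v i0 * v i0" using i0(2) by (cases "v i0 > 0") (auto simp: mult_pos_pos mult_neg_neg)
      also have "\<dots> \<le> (\<Sum>k<n. v k * v k)" using member_le_sum[of i0 "{..<n}" "\<lambda>k. v k * v k"] i0 by simp
      finally show "0 < (\<Sum>k<n. v k * v k)" .
    qed
    define Q where "Q = (\<Sum>i<n. \<Sum>j<n. v i * E i j * v j)"
    have "\<bar>Q\<bar> \<le> (\<Sum>i<n. \<Sum>j<n. \<bar>v i * E i j * v j\<bar>)"
      unfolding Q_def by (rule order.trans[OF sum_abs], rule sum_mono, rule sum_abs)
    also have "\<dots> \<le> (\<Sum>i<n. \<Sum>j<n. \<bar>E i j\<bar> * S)"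
    proof (rule sum_mono, rule sum_mono)
      fix i j assume "i \<in> {..<n}" "j \<in> {..<n}"
      hence "\<bar>v i\<bar> * \<bar>v j\<bar> \<le> S" unfolding S_def using abs_mult_le_sumsq by auto
      hence "\<bar>E i j\<bar> * (\<bar>v i\<bar> * \<bar>v j\<bar>) \<le> \<bar>E i j\<bar> * S" by (rule mult_left_mono) simp
      thus "\<bar>v i * E i j * v j\<bar> \<le> \<bar>E i j\<bar> * S" by (simp add: abs_mult algebra_simps)
    qed
    also have "\<dots> = M * S" unfolding M_def by (simp add: sum_distrib_right)
    finally have QM: "\<bar>Q\<bar> \<le> M * S" .
    have "qf n (\<lambda>i j. (if i = j then 1 else 0) + t * E i j) v = (\<Sum>i<n. \<Sum>j<n. (if i = j then v i * v j else 0) + t * (v i * E i j * v j))"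
      unfolding qf_def by (intro sum.cong refl) (simp add: algebra_simps)
    also have "\<dots> = S + t * Q"
      unfolding S_def Q_def by (simp add: sum.distrib sum_distrib_left)
    finally have qe: "qf n (\<lambda>i j. (if i = j then 1 else 0) + t * E i j) v = S + t * Q" .
    have "t * \<bar>Q\<bar> \<le> t * (M * S)" using QM tp by (simp add: mult_left_mono)
    also have "\<dots> = S * (M / (2 * (1 + M)))" unfolding t_def by (simp add: field_simps)
    also have "\<dots> < S" 
    proof -
      have h: "M / (2 * (1 + M)) < 1" using M0 by (simp add: field_simps)
      show ?thesis using mult_strict_left_mono[OF h Spos] by simp
    qed
    finally have "t * \<bar>Q\<bar> < S" .
    moreover have "- (t * \<bar>Q\<bar>) \<le> t * Q"
    proof -
      have "- \<bar>Q\<bar> \<le> Q" by arith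
      hence "t * (- \<bar>Q\<bar>) \<le> t * Q" using tp by (intro mult_left_mono) auto
      thus ?thesis by simp
    qed
    ultimately show "0 < qf n (\<lambda>i j. (if i = j then 1 else 0) + t * E i j) v" unfolding qe by linarith
  qed
qed

lemma qf_vec:
  fixes K :: "real mat"
  assumes K: "K \<in> carrier_mat n n" and v: "v \<in> carrier_vec n"
  shows "v \<bullet> (K *\<^sub>v v) = qf n (\<lambda>i j. K $$ (i,j)) (\<lambda>i. v $ i)"
  unfolding qf_def scalar_prod_def using K v
  by (auto simp: scalar_prod_def sum_distrib_left mult.assoc mult.commute mult.left_commute lessThan_atLeast0 intro!: sum.cong)

lemma sqrt_near_id:
  fixes E :: "real mat"
  assumes E: "E \<in> carrier_mat n n" and s: "transpose_mat E = E"
  shows "\<exists>t C Ci. 0 < t \<and> C \<in> carrier_mat n n \<and> Ci \<in> carrier_mat n n \<and>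
     transpose_mat C * C = 1\<^sub>m n + t \<cdot>\<^sub>m E \<and> Ci * C = 1\<^sub>m n"
proof -
  define Ef where "Ef = (\<lambda>i j. E $$ (i,j))"
  have sf: "symf n Ef" unfolding symf_def Ef_def
  proof (intro allI impI)
    fix i j assume "i < n" "j < n"
    thus "E $$ (i, j) = E $$ (j, i)" using arg_cong[OF s, of "\<lambda>A. A $$ (j,i)"] E by auto
  qed
  define M where "M = (\<Sum>i<n. \<Sum>j<n. \<bar>Ef i j\<bar>)"
  define t where "t = 1 / (2 * (1 + M))"
  define Kf where "Kf = (\<lambda>i j. (if i = j then 1 else 0) + t * Ef i j)"
  note pd = pd_near_id[OF sf, folded M_def, folded t_def, folded Kf_def]
  obtain L where L: "\<forall>i<n. \<forall>j<n. Kf i j = (\<Sum>k<n. L k i * L k j)"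
    using cholesky_fun[OF pd(2,3)] by blast
  define C where "C = mat n n (\<lambda>(k,i). L k i)"
  have Cc: "C \<in> carrier_mat n n" unfolding C_def by simp
  have K: "transpose_mat C * C = 1\<^sub>m n + t \<cdot>\<^sub>m E"
  proof (rule eq_matI)
    fix i j assume i: "i < dim_row (1\<^sub>m n + t \<cdot>\<^sub>m E)" and j: "j < dim_col (1\<^sub>m n + t \<cdot>\<^sub>m E)"
    hence i': "i < n" and j': "j < n" using E by auto
    have "(transpose_mat C * C) $$ (i,j) = (\<Sum>k<n. L k i * L k j)"
      using i' j' unfolding C_def by (auto simp: scalar_prod_def lessThan_atLeast0 intro!: sum.cong)
    also have "\<dots> = Kf i j" using L i' j' by simp
    also have "\<dots> = (1\<^sub>m n + t \<cdot>\<^sub>m E) $$ (i,j)" unfolding Kf_def Ef_def using i' j' E by auto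
    finally show "(transpose_mat C * C) $$ (i,j) = (1\<^sub>m n + t \<cdot>\<^sub>m E) $$ (i,j)" .
  qed (insert Cc E, auto)
  have KK: "1\<^sub>m n + t \<cdot>\<^sub>m E \<in> carrier_mat n n" using E by simp
  have Kf_eq: "(\<lambda>i j. (1\<^sub>m n + t \<cdot>\<^sub>m E) $$ (i,j)) = (\<lambda>i j. if i < n \<and> j < n then Kf i j else (1\<^sub>m n + t \<cdot>\<^sub>m E) $$ (i,j))"
    unfolding Kf_def Ef_def using E by (auto intro!: ext)
  have "det (1\<^sub>m n + t \<cdot>\<^sub>m E) \<noteq> 0"
  proof
    assume "det (1\<^sub>m n + t \<cdot>\<^sub>m E) = 0"
    then obtain v where v: "v \<in> carrier_vec n" "v \<noteq> 0\<^sub>v n" "(1\<^sub>m n + t \<cdot>\<^sub>m E) *\<^sub>v v = 0\<^sub>v n"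
      using det_0_iff_vec_prod_zero_field[OF KK] by blast
    have "\<exists>i<n. v $ i \<noteq> 0" using v(1,2) by (metis eq_vecI carrier_vecD index_zero_vec)
    hence "0 < qf n Kf (\<lambda>i. v $ i)" using pd(3) unfolding pdf_def by blast
    moreover have "qf n Kf (\<lambda>i. v $ i) = qf n (\<lambda>i j. (1\<^sub>m n + t \<cdot>\<^sub>m E) $$ (i,j)) (\<lambda>i. v $ i)"
      unfolding qf_def Kf_def Ef_def using E by (intro sum.cong refl) auto
    moreover have "\<dots> = v \<bullet> ((1\<^sub>m n + t \<cdot>\<^sub>m E) *\<^sub>v v)" using qf_vec[OF KK v(1)] by simp
    moreover have "\<dots> = 0" using v(3) v(1) by simp
    ultimately show False by simp
  qed
  hence "det (transpose_mat C) * det C \<noteq> 0" using K det_mult[of "transpose_mat C" n C] Cc by simp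
  hence "det C \<noteq> 0" by auto
  then obtain Ci where Ci: "Ci \<in> carrier_mat n n" "Ci * C = 1\<^sub>m n" using inv_exists[OF Cc] by blast
  show ?thesis using pd(1) Cc Ci K by blast
qed


lemma sum_mod_div:
  fixes g :: "nat \<Rightarrow> nat \<Rightarrow> 'a::comm_monoid_add"
  shows "(\<Sum>k<D*D. g (k mod D) (k div D)) = (\<Sum>i<D. \<Sum>l<D. g i l)"
proof (cases "D = 0")
  case True thus ?thesis by simp
next
  case False
  hence Dp: "0 < D" by simp
  have "(\<Sum>k<D*D. g (k mod D) (k div D)) = (\<Sum>p\<in>{..<D} \<times> {..<D}. g (fst p) (snd p))"
    apply (rule sum.reindex_bij_witness[of _ "\<lambda>p. fst p + snd p * D" "\<lambda>k. (k mod D, k div D)"])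
    using idx_lt Dp by (auto simp: idx_mod idx_div less_mult_imp_div_less)
  also have "\<dots> = (\<Sum>i<D. \<Sum>l<D. g i l)" by (simp add: sum.cartesian_product split_def)
  finally show ?thesis .
qed

definition bil :: "nat \<Rightarrow> real mat \<Rightarrow> real mat \<Rightarrow> nat \<Rightarrow> nat \<Rightarrow> real" where
  "bil D Dm F a b = (\<Sum>i<D. \<Sum>l<D. Dm $$ (a,i) * F $$ (i,l) * Dm $$ (b,l))"

lemma vecm_idx:
  assumes "F \<in> carrier_mat D D" "i < D" "l < D"
  shows "vecm F $ (i + l*D) = F $$ (i,l)"
  unfolding vecm_def using assms idx_lt[of i D l] by (simp add: idx_mod idx_div)

lemma vecm_carrier: "F \<in> carrier_mat D D \<Longrightarrow> vecm F \<in> carrier_vec (D*D)"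
  unfolding vecm_def by auto

lemma Nmat_carrier: "Nmat D Dm s ab \<in> carrier_mat D D"
  unfolding Nmat_def by (cases ab) auto

lemma vecm_dot:
  assumes F: "F \<in> carrier_mat D D" and sF: "transpose_mat F = F"
  shows "vecm (Nmat D Dm St (a,b)) \<bullet> vecm F = bil D Dm F a b"
proof -
  have Fs: "\<And>i l. i < D \<Longrightarrow> l < D \<Longrightarrow> F $$ (l,i) = F $$ (i,l)"
    using sF F by (metis carrier_matD index_transpose_mat(1))
  have "vecm (Nmat D Dm St (a,b)) \<bullet> vecm F = (\<Sum>k<D*D. Nmat D Dm St (a,b) $$ (k mod D, k div D) * F $$ (k mod D, k div D))"
    unfolding scalar_prod_def vecm_def using F Nmat_carrier[of D Dm St "(a,b)"]
    by (auto simp: lessThan_atLeast0)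
  also have "\<dots> = (\<Sum>i<D. \<Sum>l<D. Nmat D Dm St (a,b) $$ (i,l) * F $$ (i,l))"
    by (rule sum_mod_div)
  also have "\<dots> = (\<Sum>i<D. \<Sum>l<D. (Dm $$ (a,i) * Dm $$ (b,l) * F $$ (i,l) + Dm $$ (b,i) * Dm $$ (a,l) * F $$ (i,l)) / 2)"
    unfolding Nmat_def by (intro sum.cong refl) (simp add: field_simps)
  also have "\<dots> = ((\<Sum>i<D. \<Sum>l<D. Dm $$ (a,i) * Dm $$ (b,l) * F $$ (i,l)) + (\<Sum>i<D. \<Sum>l<D. Dm $$ (b,i) * Dm $$ (a,l) * F $$ (i,l))) / 2"
  proof -
    have "(\<Sum>i<D. \<Sum>l<D. (Dm $$ (a,i) * Dm $$ (b,l) * F $$ (i,l) + Dm $$ (b,i) * Dm $$ (a,l) * F $$ (i,l)) / 2)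
      = (\<Sum>i<D. \<Sum>l<D. (Dm $$ (a,i) * Dm $$ (b,l) * F $$ (i,l) + Dm $$ (b,i) * Dm $$ (a,l) * F $$ (i,l))) / 2"
      by (simp only: sum_divide_distrib)
    thus ?thesis by (simp only: sum.distrib)
  qed
  also have "(\<Sum>i<D. \<Sum>l<D. Dm $$ (b,i) * Dm $$ (a,l) * F $$ (i,l)) = (\<Sum>l<D. \<Sum>i<D. Dm $$ (b,i) * Dm $$ (a,l) * F $$ (i,l))"
    by (rule sum.swap)
  also have "\<dots> = (\<Sum>i<D. \<Sum>l<D. Dm $$ (a,i) * Dm $$ (b,l) * F $$ (i,l))"
    by (intro sum.cong refl) (simp add: Fs mult.commute)
  also have "(\<Sum>i<D. \<Sum>l<D. Dm $$ (a,i) * Dm $$ (b,l) * F $$ (i,l)) = bil D Dm F a b"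
    unfolding bil_def by (intro sum.cong refl) (simp add: mult_ac)
  finally show ?thesis by simp
qed

lemma vecm_sym:
  assumes F: "F \<in> carrier_mat D D" and sF: "\<And>i l. i < D \<Longrightarrow> l < D \<Longrightarrow> F $$ (l,i) = F $$ (i,l)"
  shows "symv D (vecm F)"
  unfolding symv_def using vecm_idx[OF F] sF by simp

lemma Nmat_St_sym: "i < D \<Longrightarrow> l < D \<Longrightarrow> Nmat D Dm St ab $$ (l,i) = Nmat D Dm St ab $$ (i,l)"
  unfolding Nmat_def by (cases ab) (simp add: algebra_simps)

lemma rank_OP:
  fixes Dm :: "real mat"
  shows "mrank (Mmat D Dm St J \<theta>) = D*(D+1) div 2 \<longleftrightarrow>
    (\<forall>F \<in> carrier_mat D D. transpose_mat F = F \<longrightarrow> (\<forall>j<J. bil D Dm F (fst (\<theta> j)) (snd (\<theta> j)) = 0) \<longrightarrow> F = 0\<^sub>m D D)"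
proof -
  define cs where "cs = map (\<lambda>j. vecm (Nmat D Dm St (\<theta> j))) [0..<J]"
  have csc: "set cs \<subseteq> carrier_vec (D*D)" unfolding cs_def by (auto intro!: vecm_carrier Nmat_carrier)
  have css: "\<forall>c\<in>set cs. symv D c" unfolding cs_def using vecm_sym[OF Nmat_carrier Nmat_St_sym] by auto
  have mr: "mrank (Mmat D Dm St J \<theta>) = vec_space.rank (D*D) (mat_of_cols (D*D) cs)"
    unfolding mrank_def Mmat_def cs_def by simp
  have cj: "\<And>F. F \<in> carrier_mat D D \<Longrightarrow> transpose_mat F = F \<Longrightarrow>
     (\<forall>c\<in>set cs. c \<bullet> vecm F = 0) \<longleftrightarrow> (\<forall>j<J. bil D Dm F (fst (\<theta> j)) (snd (\<theta> j)) = 0)"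
  proof -
    fix F :: "real mat" assume F: "F \<in> carrier_mat D D" and sF: "transpose_mat F = F"
    have "\<And>j. vecm (Nmat D Dm St (\<theta> j)) \<bullet> vecm F = bil D Dm F (fst (\<theta> j)) (snd (\<theta> j))"
      using vecm_dot[OF F sF] by (metis prod.collapse)
    thus "(\<forall>c\<in>set cs. c \<bullet> vecm F = 0) \<longleftrightarrow> (\<forall>j<J. bil D Dm F (fst (\<theta> j)) (snd (\<theta> j)) = 0)"
      unfolding cs_def by auto
  qed
  show ?thesis unfolding mr orth_rank[OF csc css]
  proof
    assume V: "\<forall>f\<in>carrier_vec (D * D). symv D f \<longrightarrow> (\<forall>c\<in>set cs. c \<bullet> f = 0) \<longrightarrow> f = 0\<^sub>v (D * D)"
    show "\<forall>F \<in> carrier_mat D D. transpose_mat F = F \<longrightarrow> (\<forall>j<J. bil D Dm F (fst (\<theta> j)) (snd (\<theta> j)) = 0) \<longrightarrow> F = 0\<^sub>m D D"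
    proof (intro ballI impI)
      fix F :: "real mat" assume F: "F \<in> carrier_mat D D" and sF: "transpose_mat F = F"
        and b: "\<forall>j<J. bil D Dm F (fst (\<theta> j)) (snd (\<theta> j)) = 0"
      have Fs: "\<And>i l. i < D \<Longrightarrow> l < D \<Longrightarrow> F $$ (l,i) = F $$ (i,l)"
        using sF F by (metis carrier_matD index_transpose_mat(1))
      have "vecm F = 0\<^sub>v (D*D)" using V vecm_carrier[OF F] vecm_sym[OF F Fs] cj[OF F sF] b by blast
      show "F = 0\<^sub>m D D"
      proof (rule eq_matI)
        fix i l assume "i < dim_row (0\<^sub>m D D :: real mat)" "l < dim_col (0\<^sub>m D D :: real mat)"
        hence il: "i < D" "l < D" by auto
        have "F $$ (i,l) = vecm F $ (i + l*D)" using vecm_idx[OF F il] by simp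
        also have "\<dots> = 0" using \<open>vecm F = 0\<^sub>v (D*D)\<close> idx_lt[OF il] by simp
        finally show "F $$ (i,l) = (0\<^sub>m D D :: real mat) $$ (i,l)" using il by simp
      qed (insert F, auto)
    qed
  next
    assume O: "\<forall>F \<in> carrier_mat D D. transpose_mat F = F \<longrightarrow> (\<forall>j<J. bil D Dm F (fst (\<theta> j)) (snd (\<theta> j)) = 0) \<longrightarrow> F = 0\<^sub>m D D"
    show "\<forall>f\<in>carrier_vec (D * D). symv D f \<longrightarrow> (\<forall>c\<in>set cs. c \<bullet> f = 0) \<longrightarrow> f = 0\<^sub>v (D * D)"
    proof (intro ballI impI)
      fix f :: "real vec" assume f: "f \<in> carrier_vec (D*D)" and sf: "symv D f" and o: "\<forall>c\<in>set cs. c \<bullet> f = 0"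
      define F where "F = mat D D (\<lambda>(i,l). f $ (i + l*D))"
      have F: "F \<in> carrier_mat D D" unfolding F_def by simp
      have vF: "vecm F = f"
      proof (rule eq_vecI)
        show "dim_vec (vecm F) = dim_vec f" using f unfolding F_def vecm_def by simp
        fix k assume "k < dim_vec f"
        hence k: "k < D*D" using f by simp
        hence Dp: "0 < D" by (cases D) auto
        have km: "k mod D < D" "k div D < D" using Dp k by (auto simp: less_mult_imp_div_less)
        show "vecm F $ k = f $ k" unfolding vecm_def F_def using k km by simp
      qed
      have sF: "transpose_mat F = F"
      proof (rule eq_matI)
        fix i l assume "i < dim_row F" "l < dim_col F"
        hence il: "i < D" "l < D" using F by auto
        show "transpose_mat F $$ (i,l) = F $$ (i,l)" unfolding F_def using il sf unfolding symv_def by simp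
      qed (insert F, auto)
      have "F = 0\<^sub>m D D" using O F sF cj[OF F sF] o vF by auto
      show "f = 0\<^sub>v (D*D)"
      proof (rule eq_vecI)
        fix k assume "k < dim_vec (0\<^sub>v (D*D) :: real vec)"
        hence k: "k < D*D" by simp
        hence Dp: "0 < D" by (cases D) auto
        have km: "k mod D < D" "k div D < D" using Dp k by (auto simp: less_mult_imp_div_less)
        have "f $ k = vecm F $ k" using vF by simp
        also have "\<dots> = 0" unfolding vecm_def using \<open>F = 0\<^sub>m D D\<close> k km by simp
        finally show "f $ k = (0\<^sub>v (D*D) :: real vec) $ k" using k by simp
      qed (insert f, auto)
    qed
  qed
qed


definition sel :: "nat \<Rightarrow> nat \<Rightarrow> real mat" where
  "sel m k = mat m k (\<lambda>(a,i). if a = i then 1 else 0)"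

lemma sel_carrier[simp]: "sel m k \<in> carrier_mat m k" unfolding sel_def by simp

lemma sel_right:
  assumes A: "A \<in> carrier_mat r m" and k: "k \<le> m"
  shows "A * sel m k = mat r k (\<lambda>(i,l). A $$ (i,l))"
proof (rule eq_matI)
  fix i l assume "i < dim_row (mat r k (\<lambda>(i,l). A $$ (i,l)))" "l < dim_col (mat r k (\<lambda>(i,l). A $$ (i,l)))"
  hence il: "i < r" "l < k" by auto
  have "(A * sel m k) $$ (i,l) = (\<Sum>a\<in>{0..<m}. A $$ (i,a) * (if a = l then 1 else 0))"
    using A il k unfolding sel_def by (auto simp: scalar_prod_def intro!: sum.cong)
  also have "\<dots> = A $$ (i,l)" using il k by (simp add: if_distrib cong: if_cong)
  finally show "(A * sel m k) $$ (i,l) = mat r k (\<lambda>(i,l). A $$ (i,l)) $$ (i,l)" using il by simp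
qed (insert A, auto simp: sel_def)

lemma sel_left:
  assumes A: "A \<in> carrier_mat m c" and k: "k \<le> m"
  shows "transpose_mat (sel m k) * A = mat k c (\<lambda>(i,l). A $$ (i,l))"
proof (rule eq_matI)
  fix i l assume "i < dim_row (mat k c (\<lambda>(i,l). A $$ (i,l)))" "l < dim_col (mat k c (\<lambda>(i,l). A $$ (i,l)))"
  hence il: "i < k" "l < c" by auto
  have "(transpose_mat (sel m k) * A) $$ (i,l) = (\<Sum>a\<in>{0..<m}. (if i = a then 1 else 0) * A $$ (a,l))"
    using A il k unfolding sel_def by (auto simp: scalar_prod_def intro!: sum.cong)
  also have "\<dots> = (\<Sum>a\<in>{0..<m}. if a = i then A $$ (a,l) else 0)" by (rule sum.cong) auto
  also have "\<dots> = A $$ (i,l)" using il k by simp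
  finally show "(transpose_mat (sel m k) * A) $$ (i,l) = mat k c (\<lambda>(i,l). A $$ (i,l)) $$ (i,l)" using il by simp
qed (insert A, auto simp: sel_def)

lemma sel_topleft:
  assumes Dm: "Dm \<in> carrier_mat W VK" and "D \<le> W" "D \<le> VK"
  shows "transpose_mat (sel W D) * Dm * sel VK D = topleft D Dm"
proof -
  have "transpose_mat (sel W D) * Dm = mat D VK (\<lambda>(i,l). Dm $$ (i,l))" by (rule sel_left[OF Dm assms(2)])
  moreover have "mat D VK (\<lambda>(i,l). Dm $$ (i,l)) * sel VK D = mat D D (\<lambda>(i,l). mat D VK (\<lambda>(i,l). Dm $$ (i,l)) $$ (i,l))"
    by (rule sel_right[OF _ assms(3)]) simp
  ultimately show ?thesis unfolding topleft_def using assms by (auto intro!: eq_matI)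
qed

lemma inv_gram:
  fixes A A' Ai Ai' :: "real mat"
  assumes A: "A \<in> carrier_mat n n" and A': "A' \<in> carrier_mat n n"
    and Ai: "Ai \<in> carrier_mat n n" and Ai': "Ai' \<in> carrier_mat n n"
    and i1: "A * Ai = 1\<^sub>m n" and i2: "Ai' * A' = 1\<^sub>m n"
    and eq: "transpose_mat A * A = transpose_mat A' * A'"
  shows "Ai * transpose_mat Ai = Ai' * transpose_mat Ai'"
proof -
  have tA: "transpose_mat A \<in> carrier_mat n n" using A by simp
  have tA': "transpose_mat A' \<in> carrier_mat n n" using A' by simp
  have tAi: "transpose_mat Ai \<in> carrier_mat n n" using Ai by simp
  have tAi': "transpose_mat Ai' \<in> carrier_mat n n" using Ai' by simp
  have i3: "Ai * A = 1\<^sub>m n" using mat_mult_left_right_inverse[OF A Ai i1] .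
  have h1: "(Ai * transpose_mat Ai) * (transpose_mat A * A) = 1\<^sub>m n"
  proof -
    have "(Ai * transpose_mat Ai) * (transpose_mat A * A) = Ai * ((transpose_mat Ai * transpose_mat A) * A)"
      using Ai tAi tA A by (simp add: assoc_mult_mat[of _ n n _ n _ n])
    also have "transpose_mat Ai * transpose_mat A = transpose_mat (A * Ai)"
      using transpose_mult[OF A Ai] by simp
    also have "\<dots> = 1\<^sub>m n" using i1 by simp
    finally show ?thesis using Ai A i3 by simp
  qed
  have h2: "(transpose_mat A' * A') * (Ai' * transpose_mat Ai') = 1\<^sub>m n"
  proof -
    have "(transpose_mat A' * A') * (Ai' * transpose_mat Ai') = transpose_mat A' * ((A' * Ai') * transpose_mat Ai')"
      using A' tA' Ai' tAi' by (simp add: assoc_mult_mat[of _ n n _ n _ n])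
    also have "A' * Ai' = 1\<^sub>m n" using mat_mult_left_right_inverse[OF Ai' A' i2] .
    also have "transpose_mat A' * (1\<^sub>m n * transpose_mat Ai') = transpose_mat (Ai' * A')"
      using transpose_mult[OF Ai' A'] tAi' by simp
    also have "\<dots> = 1\<^sub>m n" using i2 by simp
    finally show ?thesis .
  qed
  have G: "transpose_mat A * A \<in> carrier_mat n n" using A by simp
  have "Ai * transpose_mat Ai = (Ai * transpose_mat Ai) * ((transpose_mat A * A) * (Ai' * transpose_mat Ai'))"
    using h2 eq Ai tAi by simp
  also have "\<dots> = ((Ai * transpose_mat Ai) * (transpose_mat A * A)) * (Ai' * transpose_mat Ai')"
    using Ai tAi G Ai' tAi' by (simp add: assoc_mult_mat[of _ n n _ n _ n])
  also have "\<dots> = Ai' * transpose_mat Ai'" using h1 Ai' tAi' by simp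
  finally show ?thesis .
qed

lemma gram_via:
  fixes X B Bi U :: "real mat"
  assumes X: "X \<in> carrier_mat n w" and B: "B \<in> carrier_mat n n" and Bi: "Bi \<in> carrier_mat n n"
    and i: "B * Bi = 1\<^sub>m n" and U: "transpose_mat B * X = U"
  shows "X = transpose_mat Bi * U" "transpose_mat X * X = transpose_mat U * (Bi * transpose_mat Bi) * U"
proof -
  have tB: "transpose_mat B \<in> carrier_mat n n" using B by simp
  have tBi: "transpose_mat Bi \<in> carrier_mat n n" using Bi by simp
  have "transpose_mat Bi * U = (transpose_mat Bi * transpose_mat B) * X"
    unfolding U[symmetric] using tBi tB X by simp
  also have "transpose_mat Bi * transpose_mat B = transpose_mat (B * Bi)" using transpose_mult[OF B Bi] by simp
  also have "\<dots> = 1\<^sub>m n" using i by simp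
  finally show e: "X = transpose_mat Bi * U" using X by simp
  have Uc: "U \<in> carrier_mat n w" unfolding U[symmetric] using tB X by simp
  have tU: "transpose_mat U \<in> carrier_mat w n" using Uc by simp
  have "transpose_mat X * X = (transpose_mat U * Bi) * (transpose_mat Bi * U)"
    using e transpose_mult[OF tBi Uc] by simp
  also have "\<dots> = transpose_mat U * (Bi * transpose_mat Bi) * U"
    using tU Bi tBi Uc by (simp add: assoc_mult_mat[of _ w n _ n _ w] assoc_mult_mat[of _ n n _ n _ w])
  finally show "transpose_mat X * X = transpose_mat U * (Bi * transpose_mat Bi) * U" .
qed


definition inC :: "nat \<Rightarrow> nat \<Rightarrow> nat \<Rightarrow> real mat \<Rightarrow> nat \<Rightarrow> (nat \<Rightarrow> nat \<times> nat) \<Rightarrow> (nat \<Rightarrow> real) \<Rightarrow> real mat \<Rightarrow> real mat \<Rightarrow> bool" where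
  "inC D W VK Dm J \<theta> c X Y \<longleftrightarrow> X \<in> carrier_mat D W \<and> Y \<in> carrier_mat D VK \<and> transpose_mat X * Y = Dm \<and> (\<forall>j<J. (transpose_mat X * X) $$ \<theta> j = c j)"

definition OPst :: "nat \<Rightarrow> real mat \<Rightarrow> nat \<Rightarrow> (nat \<Rightarrow> nat \<times> nat) \<Rightarrow> bool" where
  "OPst D Dm J \<theta> \<longleftrightarrow> (\<forall>F \<in> carrier_mat D D. transpose_mat F = F \<longrightarrow> (\<forall>j<J. bil D Dm F (fst (\<theta> j)) (snd (\<theta> j)) = 0) \<longrightarrow> F = 0\<^sub>m D D)"

locale core =
  fixes D W VK :: nat and Dm :: "real mat" and J :: nat and \<theta> :: "nat \<Rightarrow> nat \<times> nat" and c :: "nat \<Rightarrow> real"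
  assumes Dm: "Dm \<in> carrier_mat W VK" and DW: "D \<le> W" and DV: "D \<le> VK"
    and dT: "det (topleft D Dm) \<noteq> 0"
    and th: "\<forall>j<J. fst (\<theta> j) < W \<and> snd (\<theta> j) < W"
begin

abbreviation "S \<equiv> sel W D"
abbreviation "S2 \<equiv> sel VK D"
abbreviation "T \<equiv> topleft D Dm"
definition "U = transpose_mat S2 * transpose_mat Dm"
definition "V = transpose_mat S * Dm"

lemma U_carrier[simp]: "U \<in> carrier_mat D W" unfolding U_def
  using mult_carrier_mat[of "transpose_mat S2" D VK "transpose_mat Dm" W] Dm by simp
lemma V_carrier[simp]: "V \<in> carrier_mat D VK" unfolding V_def
  using mult_carrier_mat[of "transpose_mat S" D W Dm VK] Dm by simp
lemma dimU[simp]: "dim_row U = D" "dim_col U = W" using U_carrier by (auto simp del: U_carrier)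
lemma T_carrier[simp]: "T \<in> carrier_mat D D" unfolding topleft_def by simp

lemma U_idx: "i < D \<Longrightarrow> a < W \<Longrightarrow> U $$ (i,a) = Dm $$ (a,i)"
  unfolding U_def using sel_left[of "transpose_mat Dm" VK W D] Dm DV DW by simp

lemma UFU_bil:
  assumes F: "F \<in> carrier_mat D D" and a: "a < W" and b: "b < W"
  shows "(transpose_mat U * F * U) $$ (a,b) = bil D Dm F a b"
proof -
  have "(transpose_mat U * F * U) $$ (a,b) = (\<Sum>l<D. (\<Sum>i<D. U $$ (i,a) * F $$ (i,l)) * U $$ (l,b))"
  proof -
    have dF: "dim_row F = D" "dim_col F = D" using F by auto
    have "(transpose_mat U * F * U) $$ (a,b) = (\<Sum>l\<in>{0..<D}. (transpose_mat U * F) $$ (a,l) * U $$ (l,b))"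
      using a b dF by (simp add: scalar_prod_def)
    also have "\<dots> = (\<Sum>l<D. (\<Sum>i<D. U $$ (i,a) * F $$ (i,l)) * U $$ (l,b))"
      using a b dF by (auto simp: scalar_prod_def lessThan_atLeast0 intro!: sum.cong)
    finally show ?thesis .
  qed
  also have "\<dots> = (\<Sum>l<D. \<Sum>i<D. Dm $$ (a,i) * F $$ (i,l) * Dm $$ (b,l))"
    using a b by (auto simp: U_idx sum_distrib_right intro!: sum.cong)
  also have "\<dots> = bil D Dm F a b" unfolding bil_def by (rule sum.swap)
  finally show ?thesis .
qed

lemma parts:
  assumes X: "X \<in> carrier_mat D W" and Y: "Y \<in> carrier_mat D VK" and XY: "transpose_mat X * Y = Dm"
  shows "X * S \<in> carrier_mat D D" "Y * S2 \<in> carrier_mat D D"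
    "transpose_mat (X * S) * (Y * S2) = T"
    "det (X * S) \<noteq> 0" "det (Y * S2) \<noteq> 0"
    "transpose_mat (Y * S2) * X = U" "transpose_mat (X * S) * Y = V"
proof -
  show A: "X * S \<in> carrier_mat D D" using X by simp
  show B: "Y * S2 \<in> carrier_mat D D" using Y by simp
  have tS: "transpose_mat S \<in> carrier_mat D W" by simp
  have tS2: "transpose_mat S2 \<in> carrier_mat D VK" by simp
  have tX: "transpose_mat X \<in> carrier_mat W D" using X by simp
  have tY: "transpose_mat Y \<in> carrier_mat VK D" using Y by simp
  have "transpose_mat (X * S) * (Y * S2) = (transpose_mat S * transpose_mat X) * (Y * S2)"
    using transpose_mult[OF X sel_carrier] by simp
  also have "\<dots> = transpose_mat S * ((transpose_mat X * Y) * S2)"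
    using tS tX Y by (simp add: assoc_mult_mat[of _ D W _ D _ D] assoc_mult_mat[of _ W D _ VK _ D])
  also have "\<dots> = T" unfolding XY using sel_topleft[OF Dm DW DV] tS Dm by (simp add: assoc_mult_mat[of _ D W _ VK _ D])
  finally show AB: "transpose_mat (X * S) * (Y * S2) = T" .
  have "det (transpose_mat (X * S)) * det (Y * S2) = det T"
    using det_mult[of "transpose_mat (X * S)" D "Y * S2"] A B AB by simp
  hence "det (X * S) * det (Y * S2) \<noteq> 0" using dT det_transpose[OF A] by simp
  thus "det (X * S) \<noteq> 0" "det (Y * S2) \<noteq> 0" by auto
  have YX: "transpose_mat Y * X = transpose_mat Dm"
    using transpose_mult[OF tX Y] XY by simp
  have "transpose_mat (Y * S2) * X = (transpose_mat S2 * transpose_mat Y) * X"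
    using transpose_mult[OF Y sel_carrier] by simp
  also have "\<dots> = transpose_mat S2 * (transpose_mat Y * X)" using assoc_mult_mat[OF tS2 tY X] .
  finally show "transpose_mat (Y * S2) * X = U" unfolding YX U_def .
  have "transpose_mat (X * S) * Y = (transpose_mat S * transpose_mat X) * Y"
    using transpose_mult[OF X sel_carrier] by simp
  also have "\<dots> = transpose_mat S * (transpose_mat X * Y)" using assoc_mult_mat[OF tS tX Y] .
  finally show "transpose_mat (X * S) * Y = V" unfolding XY V_def .
qed

end


context core
begin

lemma Bsym:
  fixes Bi :: "real mat"
  assumes "Bi \<in> carrier_mat D D"
  shows "transpose_mat (Bi * transpose_mat Bi) = Bi * transpose_mat Bi"
  using transpose_mult[OF assms transpose_carrier_mat[THEN iffD2, OF assms]] by simp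

lemma uniq:
  assumes OP: "OPst D Dm J \<theta>" and C1: "inC D W VK Dm J \<theta> c X Y" and C2: "inC D W VK Dm J \<theta> c X' Y'"
  shows "transpose_mat X * X = transpose_mat X' * X' \<and> transpose_mat Y * Y = transpose_mat Y' * Y'"
proof -
  from C1 have X: "X \<in> carrier_mat D W" and Y: "Y \<in> carrier_mat D VK" and XY: "transpose_mat X * Y = Dm"
    and cX: "\<forall>j<J. (transpose_mat X * X) $$ \<theta> j = c j" unfolding inC_def by auto
  from C2 have X': "X' \<in> carrier_mat D W" and Y': "Y' \<in> carrier_mat D VK" and XY': "transpose_mat X' * Y' = Dm"
    and cX': "\<forall>j<J. (transpose_mat X' * X') $$ \<theta> j = c j" unfolding inC_def by auto
  note P = parts[OF X Y XY] and P' = parts[OF X' Y' XY']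
  obtain Bi where Bi: "Bi \<in> carrier_mat D D" "Bi * (Y * S2) = 1\<^sub>m D" "(Y * S2) * Bi = 1\<^sub>m D"
    using inv_exists[OF P(2) P(5)] by blast
  obtain Bi' where Bi': "Bi' \<in> carrier_mat D D" "Bi' * (Y' * S2) = 1\<^sub>m D" "(Y' * S2) * Bi' = 1\<^sub>m D"
    using inv_exists[OF P'(2) P'(5)] by blast
  obtain Ai where Ai: "Ai \<in> carrier_mat D D" "Ai * (X * S) = 1\<^sub>m D" "(X * S) * Ai = 1\<^sub>m D"
    using inv_exists[OF P(1) P(4)] by blast
  obtain Ai' where Ai': "Ai' \<in> carrier_mat D D" "Ai' * (X' * S) = 1\<^sub>m D" "(X' * S) * Ai' = 1\<^sub>m D"
    using inv_exists[OF P'(1) P'(4)] by blast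
  define K1 where "K1 = Bi * transpose_mat Bi"
  define K2 where "K2 = Bi' * transpose_mat Bi'"
  have K1c: "K1 \<in> carrier_mat D D" unfolding K1_def using Bi(1) by simp
  have K2c: "K2 \<in> carrier_mat D D" unfolding K2_def using Bi'(1) by simp
  have gX: "transpose_mat X * X = transpose_mat U * K1 * U"
    unfolding K1_def using gram_via(2)[OF X P(2) Bi(1) Bi(3) P(6)] .
  have gX': "transpose_mat X' * X' = transpose_mat U * K2 * U"
    unfolding K2_def using gram_via(2)[OF X' P'(2) Bi'(1) Bi'(3) P'(6)] .
  define F where "F = K1 - K2"
  have Fc: "F \<in> carrier_mat D D" unfolding F_def using minus_carrier_mat[OF K2c] by simp
  have Fs: "transpose_mat F = F" unfolding F_def transpose_minus[OF K1c K2c]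
    unfolding K1_def K2_def using Bsym[OF Bi(1)] Bsym[OF Bi'(1)] by simp
  have tU: "transpose_mat U \<in> carrier_mat W D" by simp
  have UFU: "transpose_mat U * F * U = transpose_mat U * K1 * U - transpose_mat U * K2 * U"
  proof -
    have "transpose_mat U * F = transpose_mat U * K1 - transpose_mat U * K2"
      unfolding F_def by (rule mult_minus_distrib_mat[OF tU K1c K2c])
    moreover have "(transpose_mat U * K1 - transpose_mat U * K2) * U = transpose_mat U * K1 * U - transpose_mat U * K2 * U"
      by (rule minus_mult_distrib_mat[of _ W D], insert tU K1c K2c, auto)
    ultimately show ?thesis by simp
  qed
  have "\<forall>j<J. bil D Dm F (fst (\<theta> j)) (snd (\<theta> j)) = 0"
  proof (intro allI impI)
    fix j assume j: "j < J"
    obtain a b where ab: "\<theta> j = (a,b)" by (cases "\<theta> j")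
    have a: "a < W" and b: "b < W" using th j ab by auto
    have "bil D Dm F a b = (transpose_mat U * F * U) $$ (a,b)" using UFU_bil[OF Fc a b] by simp
    also have "\<dots> = (transpose_mat X * X) $$ (a,b) - (transpose_mat X' * X') $$ (a,b)"
      unfolding UFU gX gX' using a b K1c K2c by simp
    also have "\<dots> = 0" using cX[rule_format, OF j] cX'[rule_format, OF j] ab by simp
    finally show "bil D Dm F (fst (\<theta> j)) (snd (\<theta> j)) = 0" using ab by simp
  qed
  hence F0: "F = 0\<^sub>m D D" using OP Fc Fs unfolding OPst_def by blast
  have K12: "K1 = K2"
  proof (rule eq_matI)
    fix i l assume il: "i < dim_row K2" "l < dim_col K2"
    have "F $$ (i,l) = 0" using F0 il K2c by simp
    thus "K1 $$ (i,l) = K2 $$ (i,l)" unfolding F_def using il K1c K2c by simp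
  qed (insert K1c K2c, auto)
  have eqX: "transpose_mat X * X = transpose_mat X' * X'" using gX gX' K12 by simp
  have AtA: "\<And>Z. Z \<in> carrier_mat D W \<Longrightarrow> transpose_mat (Z * S) * (Z * S) = transpose_mat S * (transpose_mat Z * Z) * S"
  proof -
    fix Z :: "real mat" assume Z: "Z \<in> carrier_mat D W"
    have tZ: "transpose_mat Z \<in> carrier_mat W D" using Z by simp
    have tS: "transpose_mat S \<in> carrier_mat D W" by simp
    have "transpose_mat (Z * S) * (Z * S) = (transpose_mat S * transpose_mat Z) * (Z * S)"
      using transpose_mult[OF Z sel_carrier] by simp
    also have "\<dots> = transpose_mat S * (transpose_mat Z * Z) * S"
      using tS tZ Z by (simp add: assoc_mult_mat[of _ D W _ D _ D] assoc_mult_mat[of _ W D _ W _ D]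
           assoc_mult_mat[of _ D W _ W _ D])
    finally show "transpose_mat (Z * S) * (Z * S) = transpose_mat S * (transpose_mat Z * Z) * S" .
  qed
  have eqA: "transpose_mat (X * S) * (X * S) = transpose_mat (X' * S) * (X' * S)"
    using AtA[OF X] AtA[OF X'] eqX by simp
  have AA: "Ai * transpose_mat Ai = Ai' * transpose_mat Ai'"
    using inv_gram[OF P(1) P'(1) Ai(1) Ai'(1) Ai(3) Ai'(2) eqA] .
  have gY: "transpose_mat Y * Y = transpose_mat V * (Ai * transpose_mat Ai) * V"
    using gram_via(2)[OF Y P(1) Ai(1) Ai(3) P(7)] .
  have gY': "transpose_mat Y' * Y' = transpose_mat V * (Ai' * transpose_mat Ai') * V"
    using gram_via(2)[OF Y' P'(1) Ai'(1) Ai'(3) P'(7)] .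
  show ?thesis using eqX gY gY' AA by simp
qed

end


context core
begin

lemma US: "U * S = transpose_mat T"
proof -
  have "U * S = mat D D (\<lambda>(i,l). U $$ (i,l))" using sel_right[OF U_carrier DW] .
  also have "\<dots> = transpose_mat T"
    by (rule eq_matI) (insert DW DV, auto simp: U_idx topleft_def)
  finally show ?thesis .
qed

lemma nonuniq:
  assumes nOP: "\<not> OPst D Dm J \<theta>" and C: "inC D W VK Dm J \<theta> c X Y"
  shows "\<exists>X' Y'. inC D W VK Dm J \<theta> c X' Y' \<and> transpose_mat X' * X' \<noteq> transpose_mat X * X"
proof -
  from nOP obtain F where Fc: "F \<in> carrier_mat D D" and Fs: "transpose_mat F = F"
    and Fb: "\<forall>j<J. bil D Dm F (fst (\<theta> j)) (snd (\<theta> j)) = 0" and Fnz: "F \<noteq> 0\<^sub>m D D"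
    unfolding OPst_def by blast
  from C have X: "X \<in> carrier_mat D W" and Y: "Y \<in> carrier_mat D VK" and XY: "transpose_mat X * Y = Dm"
    and cX: "\<forall>j<J. (transpose_mat X * X) $$ \<theta> j = c j" unfolding inC_def by auto
  note P = parts[OF X Y XY]
  define B where "B = Y * S2"
  have Bc: "B \<in> carrier_mat D D" unfolding B_def by (rule P(2))
  have tB: "transpose_mat B \<in> carrier_mat D D" using Bc by simp
  have tX: "transpose_mat X \<in> carrier_mat W D" using X by simp
  have tU: "transpose_mat U \<in> carrier_mat W D" by simp
  have BX: "transpose_mat B * X = U" unfolding B_def by (rule P(6))
  define E where "E = B * F * transpose_mat B"
  have Ec: "E \<in> carrier_mat D D" unfolding E_def using Bc Fc tB by simp
  have Es: "transpose_mat E = E"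
  proof -
    have "transpose_mat E = transpose_mat (transpose_mat B) * transpose_mat (B * F)"
      unfolding E_def by (rule transpose_mult[of _ D D], insert Bc Fc tB, auto)
    also have "transpose_mat (B * F) = transpose_mat F * transpose_mat B" by (rule transpose_mult[OF Bc Fc])
    finally show ?thesis unfolding E_def Fs using Bc Fc tB by simp
  qed
  have XEX: "transpose_mat X * E * X = transpose_mat U * F * U"
  proof -
    have tU': "transpose_mat U = transpose_mat X * B"
      unfolding BX[symmetric] using transpose_mult[OF tB X] by simp
    have "transpose_mat X * E * X = (transpose_mat X * B) * F * (transpose_mat B * X)"
      unfolding E_def using tX Bc Fc tB X
      by (simp add: assoc_mult_mat[of _ W D _ D _ D] assoc_mult_mat[of _ W D _ D _ W] assoc_mult_mat[of _ D D _ D _ W])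
    thus ?thesis unfolding tU' BX by simp
  qed
  obtain t C Ci where t: "0 < t" and Cc: "C \<in> carrier_mat D D" and Cic: "Ci \<in> carrier_mat D D"
    and CC: "transpose_mat C * C = 1\<^sub>m D + t \<cdot>\<^sub>m E" and CiC: "Ci * C = 1\<^sub>m D"
    using sqrt_near_id[OF Ec Es] by blast
  have tC: "transpose_mat C \<in> carrier_mat D D" using Cc by simp
  have tCi: "transpose_mat Ci \<in> carrier_mat D D" using Cic by simp
  define X' where "X' = C * X"
  define Y' where "Y' = transpose_mat Ci * Y"
  have X': "X' \<in> carrier_mat D W" unfolding X'_def using Cc X by simp
  have Y': "Y' \<in> carrier_mat D VK" unfolding Y'_def using tCi Y by simp
  have tX'X: "transpose_mat X' = transpose_mat X * transpose_mat C" unfolding X'_def by (rule transpose_mult[OF Cc X])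
  have XY': "transpose_mat X' * Y' = Dm"
  proof -
    have "transpose_mat X' * Y' = transpose_mat X * transpose_mat C * (transpose_mat Ci * Y)"
      unfolding tX'X Y'_def ..
    also have "\<dots> = transpose_mat X * (transpose_mat C * (transpose_mat Ci * Y))"
      by (rule assoc_mult_mat[OF tX tC mult_carrier_mat[OF tCi Y]])
    also have "transpose_mat C * (transpose_mat Ci * Y) = (transpose_mat C * transpose_mat Ci) * Y"
      by (rule assoc_mult_mat[OF tC tCi Y, symmetric])
    also have "transpose_mat C * transpose_mat Ci = transpose_mat (Ci * C)" using transpose_mult[OF Cic Cc] by simp
    also have "\<dots> = 1\<^sub>m D" using CiC by simp
    finally show ?thesis using XY Y by simp
  qed
  have G': "transpose_mat X' * X' = transpose_mat X * X + t \<cdot>\<^sub>m (transpose_mat U * F * U)"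
  proof -
    have "transpose_mat X' * X' = (transpose_mat X * transpose_mat C) * (C * X)"
      by (simp only: tX'X) (simp add: X'_def)
    also have "\<dots> = transpose_mat X * (transpose_mat C * (C * X))"
      by (rule assoc_mult_mat[OF tX tC mult_carrier_mat[OF Cc X]])
    also have "transpose_mat C * (C * X) = (transpose_mat C * C) * X"
      by (rule assoc_mult_mat[OF tC Cc X, symmetric])
    also have "transpose_mat X * ((transpose_mat C * C) * X) = transpose_mat X * (transpose_mat C * C) * X"
      by (rule assoc_mult_mat[OF tX mult_carrier_mat[OF tC Cc] X, symmetric])
    also have "\<dots> = transpose_mat X * (1\<^sub>m D + t \<cdot>\<^sub>m E) * X" unfolding CC ..
    also have "transpose_mat X * (1\<^sub>m D + t \<cdot>\<^sub>m E) = transpose_mat X + t \<cdot>\<^sub>m (transpose_mat X * E)"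
      using mult_add_distrib_mat[OF tX one_carrier_mat smult_carrier_mat[OF Ec]] mult_smult_distrib[OF tX Ec] tX by simp
    also have "(transpose_mat X + t \<cdot>\<^sub>m (transpose_mat X * E)) * X = transpose_mat X * X + t \<cdot>\<^sub>m (transpose_mat X * E * X)"
      using add_mult_distrib_mat[OF tX smult_carrier_mat[OF mult_carrier_mat[OF tX Ec]] X]
        mult_smult_assoc_mat[OF mult_carrier_mat[OF tX Ec] X] by simp
    finally show ?thesis unfolding XEX .
  qed
  have UFUc: "transpose_mat U * F * U \<in> carrier_mat W W" using mult_carrier_mat[OF mult_carrier_mat[OF tU Fc] U_carrier] .
  have cX': "\<forall>j<J. (transpose_mat X' * X') $$ \<theta> j = c j"
  proof (intro allI impI)
    fix j assume j: "j < J"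
    obtain a b where ab: "\<theta> j = (a,b)" by (cases "\<theta> j")
    have a: "a < W" and b: "b < W" using th j ab by auto
    have "(transpose_mat X' * X') $$ (a,b) = (transpose_mat X * X) $$ (a,b) + t * (transpose_mat U * F * U) $$ (a,b)"
      unfolding G' using a b X UFUc by simp
    also have "(transpose_mat U * F * U) $$ (a,b) = 0" using UFU_bil[OF Fc a b] Fb[rule_format, OF j] ab by simp
    finally show "(transpose_mat X' * X') $$ \<theta> j = c j" using cX[rule_format, OF j] ab by simp
  qed
  have neq: "transpose_mat X' * X' \<noteq> transpose_mat X * X"
  proof
    assume eq: "transpose_mat X' * X' = transpose_mat X * X"
    have Z: "transpose_mat U * F * U = 0\<^sub>m W W"
    proof (rule eq_matI)
      fix a b assume ab: "a < dim_row (0\<^sub>m W W :: real mat)" "b < dim_col (0\<^sub>m W W :: real mat)"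
      hence "(transpose_mat X' * X') $$ (a,b) = (transpose_mat X * X) $$ (a,b)" using eq by simp
      hence "t * (transpose_mat U * F * U) $$ (a,b) = 0" unfolding G' using ab X UFUc by simp
      thus "(transpose_mat U * F * U) $$ (a,b) = (0\<^sub>m W W :: real mat) $$ (a,b)" using t ab by simp
    qed (insert UFUc, auto)
    have tS: "transpose_mat S \<in> carrier_mat D W" by simp
    have "transpose_mat S * (transpose_mat U * F * U) * S = transpose_mat (U * S) * F * (U * S)"
    proof -
      have e0: "transpose_mat (U * S) = transpose_mat S * transpose_mat U" by (rule transpose_mult[OF U_carrier sel_carrier])
      have UF: "transpose_mat U * F \<in> carrier_mat W D" using mult_carrier_mat[OF tU Fc] .
      have "transpose_mat S * (transpose_mat U * F * U) * S = (transpose_mat S * (transpose_mat U * F) * U) * S"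
        using assoc_mult_mat[OF tS UF U_carrier] by simp
      also have "\<dots> = (transpose_mat S * (transpose_mat U * F)) * (U * S)"
        by (rule assoc_mult_mat[OF mult_carrier_mat[OF tS UF] U_carrier sel_carrier])
      also have "transpose_mat S * (transpose_mat U * F) = transpose_mat S * transpose_mat U * F"
        by (rule assoc_mult_mat[OF tS tU Fc, symmetric])
      finally show ?thesis unfolding e0 .
    qed
    also have "\<dots> = T * F * transpose_mat T" unfolding US by simp
    finally have TFT: "T * F * transpose_mat T = 0\<^sub>m D D" unfolding Z
      using right_mult_zero_mat[OF tS, of W] left_mult_zero_mat[OF sel_carrier, of D W D] by simp
    obtain Ti where Ti: "Ti \<in> carrier_mat D D" "Ti * T = 1\<^sub>m D" "T * Ti = 1\<^sub>m D"
      using inv_exists[OF T_carrier dT] by blast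
    have tT: "transpose_mat T \<in> carrier_mat D D" by simp
    have tTi: "transpose_mat Ti \<in> carrier_mat D D" using Ti(1) by simp
    have "Ti * (T * F * transpose_mat T) * transpose_mat Ti = (Ti * T) * F * (transpose_mat T * transpose_mat Ti)"
      using Ti(1) T_carrier Fc tT tTi by (simp add: assoc_mult_mat[of _ D D _ D _ D] mult_carrier_mat[of _ D D _ D])
    also have "transpose_mat T * transpose_mat Ti = transpose_mat (Ti * T)" using transpose_mult[OF Ti(1) T_carrier] by simp
    also have "\<dots> = 1\<^sub>m D" using Ti(2) by simp
    finally have "F = Ti * (T * F * transpose_mat T) * transpose_mat Ti" using Ti(2) Fc by simp
    also have "\<dots> = 0\<^sub>m D D" unfolding TFT using Ti(1) tTi by simp
    finally show False using Fnz by simp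
  qed
  show ?thesis
    using X' Y' XY' cX' neq unfolding inC_def by blast
qed

lemma core_equiv:
  assumes ex: "inC D W VK Dm J \<theta> c X0 Y0"
  shows "(\<forall>X Y X' Y'. inC D W VK Dm J \<theta> c X Y \<longrightarrow> inC D W VK Dm J \<theta> c X' Y' \<longrightarrow>
           transpose_mat X * X = transpose_mat X' * X' \<and> transpose_mat Y * Y = transpose_mat Y' * Y')
     \<longleftrightarrow> mrank (Mmat D Dm St J \<theta>) = D*(D+1) div 2"
  unfolding rank_OP[folded OPst_def]
proof
  assume H: "\<forall>X Y X' Y'. inC D W VK Dm J \<theta> c X Y \<longrightarrow> inC D W VK Dm J \<theta> c X' Y' \<longrightarrow>
           transpose_mat X * X = transpose_mat X' * X' \<and> transpose_mat Y * Y = transpose_mat Y' * Y'"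
  show "OPst D Dm J \<theta>"
  proof (rule ccontr)
    assume "\<not> OPst D Dm J \<theta>"
    from nonuniq[OF this ex] obtain X' Y' where "inC D W VK Dm J \<theta> c X' Y'" "transpose_mat X' * X' \<noteq> transpose_mat X0 * X0"
      by blast
    thus False using H ex by blast
  qed
next
  assume "OPst D Dm J \<theta>"
  thus "\<forall>X Y X' Y'. inC D W VK Dm J \<theta> c X Y \<longrightarrow> inC D W VK Dm J \<theta> c X' Y' \<longrightarrow>
           transpose_mat X * X = transpose_mat X' * X' \<and> transpose_mat Y * Y = transpose_mat Y' * Y'"
    using uniq by blast
qed

end


lemma hcat_carrier: "X \<in> carrier_mat D W \<Longrightarrow> Y \<in> carrier_mat D VK \<Longrightarrow> hcat X Y \<in> carrier_mat D (W + VK)"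
  unfolding hcat_def by auto

lemma hcat_idx:
  assumes "X \<in> carrier_mat D W" "Y \<in> carrier_mat D VK" "i < D" "p < W + VK"
  shows "hcat X Y $$ (i,p) = (if p < W then X $$ (i,p) else Y $$ (i, p - W))"
  unfolding hcat_def using assms by auto

lemma gr_idx:
  assumes X: "X \<in> carrier_mat D W" and Y: "Y \<in> carrier_mat D VK" and p: "p < W + VK" and q: "q < W + VK"
  shows "(transpose_mat (hcat X Y) * hcat X Y) $$ (p,q) =
    (\<Sum>k<D. (if p < W then X $$ (k,p) else Y $$ (k, p - W)) * (if q < W then X $$ (k,q) else Y $$ (k, q - W)))"
  using hcat_carrier[OF X Y] p q hcat_idx[OF X Y _ p] hcat_idx[OF X Y _ q]
  by (auto simp: scalar_prod_def lessThan_atLeast0 intro!: sum.cong)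

lemma gram_idx:
  assumes X: "X \<in> carrier_mat D W" and Y: "Y \<in> carrier_mat D VK" and p: "p < W" and q: "q < VK"
  shows "(transpose_mat X * Y) $$ (p,q) = (\<Sum>k<D. X $$ (k,p) * Y $$ (k,q))"
  using X Y p q by (auto simp: scalar_prod_def lessThan_atLeast0 intro!: sum.cong)

lemma gram_hcat_eq:
  fixes X Y X' Y' :: "real mat"
  assumes X: "X \<in> carrier_mat D W" and Y: "Y \<in> carrier_mat D VK"
    and X': "X' \<in> carrier_mat D W" and Y': "Y' \<in> carrier_mat D VK"
    and XY: "transpose_mat X * Y = transpose_mat X' * Y'"
  shows "transpose_mat (hcat X Y) * hcat X Y = transpose_mat (hcat X' Y') * hcat X' Y' \<longleftrightarrow>
    transpose_mat X * X = transpose_mat X' * X' \<and> transpose_mat Y * Y = transpose_mat Y' * Y'"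
proof
  assume G: "transpose_mat (hcat X Y) * hcat X Y = transpose_mat (hcat X' Y') * hcat X' Y'"
  have "transpose_mat X * X = transpose_mat X' * X'"
  proof (rule eq_matI)
    fix p q assume "p < dim_row (transpose_mat X' * X')" "q < dim_col (transpose_mat X' * X')"
    hence pq: "p < W" "q < W" using X' by auto
    have "(transpose_mat X * X) $$ (p,q) = (transpose_mat (hcat X Y) * hcat X Y) $$ (p,q)"
      using gram_idx[OF X X pq] gr_idx[OF X Y, of p q] pq by simp
    also have "\<dots> = (transpose_mat X' * X') $$ (p,q)"
      unfolding G using gram_idx[OF X' X' pq] gr_idx[OF X' Y', of p q] pq by simp
    finally show "(transpose_mat X * X) $$ (p,q) = (transpose_mat X' * X') $$ (p,q)" .
  qed (insert X X', auto)
  moreover have "transpose_mat Y * Y = transpose_mat Y' * Y'"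
  proof (rule eq_matI)
    fix p q assume "p < dim_row (transpose_mat Y' * Y')" "q < dim_col (transpose_mat Y' * Y')"
    hence pq: "p < VK" "q < VK" using Y' by auto
    have "(transpose_mat Y * Y) $$ (p,q) = (transpose_mat (hcat X Y) * hcat X Y) $$ (p + W, q + W)"
      using gram_idx[OF Y Y pq] gr_idx[OF X Y, of "p + W" "q + W"] pq by simp
    also have "\<dots> = (transpose_mat Y' * Y') $$ (p,q)"
      unfolding G using gram_idx[OF Y' Y' pq] gr_idx[OF X' Y', of "p + W" "q + W"] pq by simp
    finally show "(transpose_mat Y * Y) $$ (p,q) = (transpose_mat Y' * Y') $$ (p,q)" .
  qed (insert Y Y', auto)
  ultimately show "transpose_mat X * X = transpose_mat X' * X' \<and> transpose_mat Y * Y = transpose_mat Y' * Y'" ..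
next
  assume H: "transpose_mat X * X = transpose_mat X' * X' \<and> transpose_mat Y * Y = transpose_mat Y' * Y'"
  have e1: "(\<Sum>k<D. X $$ (k,p) * X $$ (k,q)) = (\<Sum>k<D. X' $$ (k,p) * X' $$ (k,q))" if "p < W" "q < W" for p q
    using H gram_idx[OF X X that] gram_idx[OF X' X' that] by simp
  have e2: "(\<Sum>k<D. Y $$ (k,p) * Y $$ (k,q)) = (\<Sum>k<D. Y' $$ (k,p) * Y' $$ (k,q))" if "p < VK" "q < VK" for p q
    using H gram_idx[OF Y Y that] gram_idx[OF Y' Y' that] by simp
  have e3: "(\<Sum>k<D. X $$ (k,p) * Y $$ (k,q)) = (\<Sum>k<D. X' $$ (k,p) * Y' $$ (k,q))" if "p < W" "q < VK" for p q
    using XY gram_idx[OF X Y that] gram_idx[OF X' Y' that] by simp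
  have e4: "(\<Sum>k<D. Y $$ (k,p) * X $$ (k,q)) = (\<Sum>k<D. Y' $$ (k,p) * X' $$ (k,q))" if "p < VK" "q < W" for p q
    using e3[OF that(2,1)] by (simp add: mult.commute)
  show "transpose_mat (hcat X Y) * hcat X Y = transpose_mat (hcat X' Y') * hcat X' Y'"
  proof (rule eq_matI)
    fix p q assume "p < dim_row (transpose_mat (hcat X' Y') * hcat X' Y')" "q < dim_col (transpose_mat (hcat X' Y') * hcat X' Y')"
    hence pq: "p < W + VK" "q < W + VK" using hcat_carrier[OF X' Y'] by auto
    show "(transpose_mat (hcat X Y) * hcat X Y) $$ (p,q) = (transpose_mat (hcat X' Y') * hcat X' Y') $$ (p,q)"
      unfolding gr_idx[OF X Y pq] gr_idx[OF X' Y' pq]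
      using pq e1 e2 e3 e4 by (cases "p < W"; cases "q < W") auto
  qed (insert hcat_carrier[OF X Y] hcat_carrier[OF X' Y'], auto)
qed

lemma rank_le_nr:
  fixes A :: "real mat"
  assumes A: "A \<in> carrier_mat n nc"
  shows "vec_space.rank n A \<le> n"
proof -
  interpret V: vec_space "TYPE(real)" n .
  have cs: "set (cols A) \<subseteq> carrier_vec n" using A cols_dim by blast
  have "vectorspace.dim class_ring (V.vs (V.span (set (cols A)))) \<le> V.dim"
    by (rule V.subspace_dim[OF V.span_is_subspace[OF cs] V.fin_dim V.fin_dim_span_cols[OF A]])
  thus ?thesis unfolding V.rank_def V.dim_is_n .
qed

lemma pick_ivl:
  assumes "k < D"
  shows "pick {a..<a+D} k = a + k"
proof -
  have "{x\<in>{a..<a+D}. x < a + k} = {a..<a+k}" using assms by auto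
  hence "card {x\<in>{a..<a+D}. x < a + k} = k" by simp
  moreover have "a + k \<in> {a..<a+D}" using assms by simp
  ultimately show ?thesis using pick_card_in_set[of "a+k" "{a..<a+D}"] by simp
qed

lemma mrank_gr:
  fixes X Y Dm :: "real mat"
  assumes X: "X \<in> carrier_mat D W" and Y: "Y \<in> carrier_mat D VK" and XY: "transpose_mat X * Y = Dm"
    and DW: "D \<le> W" and DV: "D \<le> VK" and dT: "det (topleft D Dm) \<noteq> 0"
  shows "mrank (transpose_mat (hcat X Y) * hcat X Y) = D"
proof -
  define N where "N = W + VK"
  define P where "P = hcat X Y"
  have Pc: "P \<in> carrier_mat D N" unfolding P_def N_def by (rule hcat_carrier[OF X Y])
  define G where "G = transpose_mat P * P"
  have Gc: "G \<in> carrier_mat N N" unfolding G_def using Pc by simp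
  interpret VN: vec_space "TYPE(real)" N .
  have mr: "mrank G = VN.rank G" unfolding mrank_def using Gc by simp
  define Gk where "Gk = (\<lambda>m. mat N N (\<lambda>(p,q). \<Sum>k<m. P $$ (k,p) * P $$ (k,q)))"
  have Gkc: "\<And>m. Gk m \<in> carrier_mat N N" unfolding Gk_def by simp
  have rk: "\<And>m. VN.rank (Gk m) \<le> m"
  proof -
    fix m show "VN.rank (Gk m) \<le> m"
    proof (induct m)
      case 0
      have "Gk 0 = 0\<^sub>m N N" unfolding Gk_def by (rule eq_matI) auto
      thus ?case using VN.rank_0I by simp
    next
      case (Suc m)
      define R where "R = mat N N (\<lambda>(p,q). P $$ (m,p) * P $$ (m,q))"
      have Rc: "R \<in> carrier_mat N N" unfolding R_def by simp
      have "Gk (Suc m) = Gk m + R" unfolding Gk_def R_def by (rule eq_matI) auto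
      moreover have "VN.rank R \<le> 1"
        by (rule VN.rank_le_1_product_entries[OF Rc, of "\<lambda>p. P $$ (m,p)" "\<lambda>q. P $$ (m,q)"]) (auto simp: R_def)
      ultimately show ?case using VN.rank_subadditive[OF Gkc Rc, of m] Suc by simp
    qed
  qed
  have GGk: "G = Gk D"
    unfolding G_def Gk_def using Pc by (intro eq_matI) (auto simp: scalar_prod_def lessThan_atLeast0 intro!: sum.cong)
  have le: "VN.rank G \<le> D" using rk[of D] GGk by simp
  define I1 where "I1 = {0..<0+D}"
  define I2 where "I2 = {W..<W+D}"
  have c1: "{i. i < dim_row G \<and> i \<in> I1} = {0..<D}" unfolding I1_def using Gc DW N_def by auto
  have c2: "{j. j < dim_col G \<and> j \<in> I2} = {W..<W+D}" unfolding I2_def using Gc DV N_def by auto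
  have sub: "submatrix G I1 I2 = topleft D Dm"
  proof (rule eq_matI)
    show "dim_row (submatrix G I1 I2) = dim_row (topleft D Dm)" unfolding dim_submatrix c1 topleft_def by simp
    show "dim_col (submatrix G I1 I2) = dim_col (topleft D Dm)" unfolding dim_submatrix c2 topleft_def by simp
    fix i l assume "i < dim_row (topleft D Dm)" "l < dim_col (topleft D Dm)"
    hence il: "i < D" "l < D" unfolding topleft_def by auto
    have pi: "pick I1 i = i" unfolding I1_def using pick_ivl[OF il(1), of 0] by simp
    have pl: "pick I2 l = W + l" unfolding I2_def using pick_ivl[OF il(2), of W] by simp
    have "submatrix G I1 I2 $$ (i,l) = G $$ (i, W + l)"
      unfolding submatrix_def c1 c2 using il pi pl by simp
    also have "\<dots> = (\<Sum>k<D. X $$ (k,i) * Y $$ (k,l))"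
      unfolding G_def P_def using gr_idx[OF X Y, of i "W + l"] il DW DV by simp
    also have "\<dots> = Dm $$ (i,l)" using gram_idx[OF X Y, of i l] il DW DV XY by simp
    finally show "submatrix G I1 I2 $$ (i,l) = topleft D Dm $$ (i,l)" unfolding topleft_def using il by simp
  qed
  have "card {j. j < N \<and> j \<in> I2} \<le> VN.rank G"
    using VN.rank_gt_minor[OF Gc, of I1 I2] dT sub by simp
  moreover have "card {j. j < N \<and> j \<in> I2} = D" using c2 Gc by simp
  ultimately show ?thesis using le mr unfolding G_def P_def by simp
qed


lemma topleft_transpose:
  assumes "Dm \<in> carrier_mat W VK" "D \<le> W" "D \<le> VK"
  shows "topleft D (transpose_mat Dm) = transpose_mat (topleft D Dm)"
  unfolding topleft_def using assms by (intro eq_matI) auto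

lemma Mmat_swap:
  assumes Dm: "Dm \<in> carrier_mat W VK" and DW: "D \<le> W"
    and th: "\<forall>j<J. fst (\<theta> j) < VK \<and> snd (\<theta> j) < VK"
  shows "Mmat D (transpose_mat Dm) St J \<theta> = Mmat D Dm Mx J \<theta>"
proof -
  have "\<And>j. j < J \<Longrightarrow> Nmat D (transpose_mat Dm) St (\<theta> j) = Nmat D Dm Mx (\<theta> j)"
  proof -
    fix j assume j: "j < J"
    obtain a b where ab: "\<theta> j = (a,b)" by (cases "\<theta> j")
    have a: "a < VK" and b: "b < VK" using th j ab by auto
    show "Nmat D (transpose_mat Dm) St (\<theta> j) = Nmat D Dm Mx (\<theta> j)"
      unfolding ab Nmat_def using a b Dm DW by (intro eq_matI) auto
  qed
  hence "map (\<lambda>j. vecm (Nmat D (transpose_mat Dm) St (\<theta> j))) [0..<J] = map (\<lambda>j. vecm (Nmat D Dm Mx (\<theta> j))) [0..<J]"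
    by (intro map_cong refl) simp
  thus ?thesis unfolding Mmat_def by (rule arg_cong)
qed

theorem theorem2:
  fixes D W V K J :: nat and Dm :: "real mat" and s :: sharp
    and \<theta> :: "nat \<Rightarrow> nat \<times> nat" and c :: "nat \<Rightarrow> real"
  assumes "0 < D" "0 < W" "0 < V" "0 < K"
    and "Dm \<in> carrier_mat W (V * K)"
    and "mrank Dm = D"
    and "mrank (topleft D Dm) = D"
    and "\<forall>j<J. fst (\<theta> j) < (if s = St then W else V * K) \<and> snd (\<theta> j) < (if s = St then W else V * K)"
    and "\<exists>G. compatible D W (V * K) Dm s J \<theta> c G"
  shows "(\<exists>!G. G \<in> carrier_mat (W + V * K) (W + V * K) \<and> mrank G = D \<and> compatible D W (V * K) Dm s J \<theta> c G)
         \<longleftrightarrow> mrank (Mmat D Dm s J \<theta>) = D * (D + 1) div 2"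
proof -
  define VK where "VK = V * K"
  have Dm: "Dm \<in> carrier_mat W VK" using assms(5) unfolding VK_def .
  have DV: "D \<le> VK" using vec_space.rank_le_nc[OF Dm] assms(6) Dm unfolding mrank_def by simp
  have DW: "D \<le> W" using rank_le_nr[OF Dm] assms(6) Dm unfolding mrank_def by simp
  have Tc: "topleft D Dm \<in> carrier_mat D D" unfolding topleft_def by simp
  have dT: "det (topleft D Dm) \<noteq> 0"
    using vec_space.det_rank_iff[OF Tc] assms(7) Tc unfolding mrank_def by simp
  define pc where "pc = (\<lambda>X Y. X \<in> carrier_mat D W \<and> Y \<in> carrier_mat D VK \<and> transpose_mat X * Y = Dm \<and>
     (\<forall>j<J. (if s = St then transpose_mat X * X else transpose_mat Y * Y) $$ \<theta> j = c j))"
  define gr where "gr = (\<lambda>X Y. transpose_mat (hcat X Y) * hcat X Y :: real mat)"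
  have comp: "\<And>G. compatible D W VK Dm s J \<theta> c G \<longleftrightarrow> (\<exists>X Y. pc X Y \<and> G = gr X Y)"
    unfolding compatible_def pc_def gr_def by (auto split: if_splits)
  have allG: "\<And>X Y. pc X Y \<Longrightarrow> gr X Y \<in> carrier_mat (W + VK) (W + VK) \<and> mrank (gr X Y) = D"
  proof -
    fix X Y assume "pc X Y"
    hence X: "X \<in> carrier_mat D W" and Y: "Y \<in> carrier_mat D VK" and XY: "transpose_mat X * Y = Dm"
      unfolding pc_def by auto
    show "gr X Y \<in> carrier_mat (W + VK) (W + VK) \<and> mrank (gr X Y) = D"
      unfolding gr_def using hcat_carrier[OF X Y] mrank_gr[OF X Y XY DW DV dT] by simp
  qed
  obtain X0 Y0 where ex: "pc X0 Y0" using assms(9) comp unfolding VK_def by blast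
  have uniqG: "(\<exists>!G. G \<in> carrier_mat (W + VK) (W + VK) \<and> mrank G = D \<and> compatible D W VK Dm s J \<theta> c G)
     \<longleftrightarrow> (\<forall>X Y X' Y'. pc X Y \<longrightarrow> pc X' Y' \<longrightarrow> transpose_mat X * X = transpose_mat X' * X' \<and> transpose_mat Y * Y = transpose_mat Y' * Y')"
  proof
    assume U: "\<exists>!G. G \<in> carrier_mat (W + VK) (W + VK) \<and> mrank G = D \<and> compatible D W VK Dm s J \<theta> c G"
    show "\<forall>X Y X' Y'. pc X Y \<longrightarrow> pc X' Y' \<longrightarrow> transpose_mat X * X = transpose_mat X' * X' \<and> transpose_mat Y * Y = transpose_mat Y' * Y'"
    proof (intro allI impI)
      fix X Y X' Y' assume p1: "pc X Y" and p2: "pc X' Y'"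
      have P1: "gr X Y \<in> carrier_mat (W + VK) (W + VK) \<and> mrank (gr X Y) = D \<and> compatible D W VK Dm s J \<theta> c (gr X Y)"
        using allG[OF p1] comp[of "gr X Y"] p1 by blast
      have P2: "gr X' Y' \<in> carrier_mat (W + VK) (W + VK) \<and> mrank (gr X' Y') = D \<and> compatible D W VK Dm s J \<theta> c (gr X' Y')"
        using allG[OF p2] comp[of "gr X' Y'"] p2 by blast
      have "gr X Y = gr X' Y'" using U P1 P2 by blast
      moreover have c: "X \<in> carrier_mat D W" "Y \<in> carrier_mat D VK" "X' \<in> carrier_mat D W" "Y' \<in> carrier_mat D VK"
        "transpose_mat X * Y = transpose_mat X' * Y'" using p1 p2 unfolding pc_def by auto
      ultimately show "transpose_mat X * X = transpose_mat X' * X' \<and> transpose_mat Y * Y = transpose_mat Y' * Y'"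
        using gram_hcat_eq[OF c] unfolding gr_def by simp
    qed
  next
    assume H: "\<forall>X Y X' Y'. pc X Y \<longrightarrow> pc X' Y' \<longrightarrow> transpose_mat X * X = transpose_mat X' * X' \<and> transpose_mat Y * Y = transpose_mat Y' * Y'"
    show "\<exists>!G. G \<in> carrier_mat (W + VK) (W + VK) \<and> mrank G = D \<and> compatible D W VK Dm s J \<theta> c G"
    proof (rule ex1I[of _ "gr X0 Y0"])
      show "gr X0 Y0 \<in> carrier_mat (W + VK) (W + VK) \<and> mrank (gr X0 Y0) = D \<and> compatible D W VK Dm s J \<theta> c (gr X0 Y0)"
        using allG[OF ex] comp ex by blast
      fix G assume "G \<in> carrier_mat (W + VK) (W + VK) \<and> mrank G = D \<and> compatible D W VK Dm s J \<theta> c G"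
      then obtain X Y where p: "pc X Y" and G: "G = gr X Y" using comp by blast
      have c: "X \<in> carrier_mat D W" "Y \<in> carrier_mat D VK" "X0 \<in> carrier_mat D W" "Y0 \<in> carrier_mat D VK"
        "transpose_mat X * Y = transpose_mat X0 * Y0" using p ex unfolding pc_def by auto
      have "transpose_mat X * X = transpose_mat X0 * X0 \<and> transpose_mat Y * Y = transpose_mat Y0 * Y0"
        using H p ex by blast
      thus "G = gr X0 Y0" unfolding G gr_def using gram_hcat_eq[OF c] by simp
    qed
  qed
  have main: "(\<forall>X Y X' Y'. pc X Y \<longrightarrow> pc X' Y' \<longrightarrow> transpose_mat X * X = transpose_mat X' * X' \<and> transpose_mat Y * Y = transpose_mat Y' * Y')
     \<longleftrightarrow> mrank (Mmat D Dm s J \<theta>) = D * (D + 1) div 2"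
  proof (cases s)
    case St
    have th: "\<forall>j<J. fst (\<theta> j) < W \<and> snd (\<theta> j) < W" using assms(8) St by simp
    interpret co: core D W VK Dm J \<theta> c using Dm DW DV dT th by unfold_locales auto
    have pcC: "pc = inC D W VK Dm J \<theta> c" unfolding pc_def inC_def St by (intro ext) simp
    show ?thesis unfolding St pcC using co.core_equiv[OF ex[unfolded pcC]] .
  next
    case Mx
    have th: "\<forall>j<J. fst (\<theta> j) < VK \<and> snd (\<theta> j) < VK" using assms(8) Mx unfolding VK_def by simp
    have tDm: "transpose_mat Dm \<in> carrier_mat VK W" using Dm by simp
    have dT': "det (topleft D (transpose_mat Dm)) \<noteq> 0"
      unfolding topleft_transpose[OF Dm DW DV] using det_transpose[OF Tc] dT by simp
    interpret co: core D VK W "transpose_mat Dm" J \<theta> c using tDm DW DV dT' th by unfold_locales auto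
    have pcC: "pc X Y = inC D VK W (transpose_mat Dm) J \<theta> c Y X" for X Y
    proof -
      have "X \<in> carrier_mat D W \<Longrightarrow> Y \<in> carrier_mat D VK \<Longrightarrow> transpose_mat X * Y = Dm \<longleftrightarrow> transpose_mat Y * X = transpose_mat Dm"
      proof -
        assume X: "X \<in> carrier_mat D W" and Y: "Y \<in> carrier_mat D VK"
        have e: "transpose_mat (transpose_mat X * Y) = transpose_mat Y * X"
          using transpose_mult[OF transpose_carrier_mat[THEN iffD2, OF X] Y] by simp
        show "transpose_mat X * Y = Dm \<longleftrightarrow> transpose_mat Y * X = transpose_mat Dm"
        proof
          assume "transpose_mat X * Y = Dm" thus "transpose_mat Y * X = transpose_mat Dm"
            using e by simp
        next
          assume "transpose_mat Y * X = transpose_mat Dm"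
          hence "transpose_mat (transpose_mat (transpose_mat X * Y)) = transpose_mat (transpose_mat Dm)"
            using e by simp
          thus "transpose_mat X * Y = Dm" by simp
        qed
      qed
      thus ?thesis unfolding pc_def inC_def Mx by auto
    qed
    have "(\<forall>X Y X' Y'. pc X Y \<longrightarrow> pc X' Y' \<longrightarrow> transpose_mat X * X = transpose_mat X' * X' \<and> transpose_mat Y * Y = transpose_mat Y' * Y')
      \<longleftrightarrow> (\<forall>Y X Y' X'. inC D VK W (transpose_mat Dm) J \<theta> c Y X \<longrightarrow> inC D VK W (transpose_mat Dm) J \<theta> c Y' X' \<longrightarrow>
           transpose_mat Y * Y = transpose_mat Y' * Y' \<and> transpose_mat X * X = transpose_mat X' * X')"
      unfolding pcC by blast
    also have "\<dots> \<longleftrightarrow> mrank (Mmat D (transpose_mat Dm) St J \<theta>) = D * (D + 1) div 2"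
      using co.core_equiv[OF ex[unfolded pcC]] .
    also have "Mmat D (transpose_mat Dm) St J \<theta> = Mmat D Dm s J \<theta>"
      unfolding Mx using Mmat_swap[OF Dm DW th] .
    finally show ?thesis .
  qed
  show ?thesis using uniqG main unfolding VK_def by simp
qed


end
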